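(* Let $d>K\ge1$, $\mathbf Q\in\mathrm{St}(d,K)$, $\lambda_1>\dots>\lambda_K>0$, $\boldsymbol\Theta=\mathrm{diag}(\sqrt{\lambda_1},\dots,\sqrt{\lambda_K})$, $a_1>\dots>a_K>0$, and let $g$, $d_F$, $\mathcal A_\alpha$, $\rho_\alpha$ be as in the context. Then there exists $\delta\in(0,\tfrac{\sqrt2}{2})$ with $\lambda_Ka_K-\lambda_1a_1\delta>0$ such that for every $\alpha$ with $0\le\alpha<\lambda_Ka_K-\lambda_1a_1\delta$ there exists $\eta_1>0$ such that $$d_F(\mathbf X,\mathbf Q)\le\eta_1\,\rho_\alpha(\mathbf X)\quad\text{for all }\mathbf X\in\mathrm{St}(d,K)\text{ with }d_F(\mathbf X,\mathbf Q)\le\delta.$$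
   Context: $\mathrm{St}(d,K)=\{\mathbf X\in\mathbb R^{d\times K}:\mathbf X^\top\mathbf X=\mathbf I_K\}$. $g(\mathbf X)=\mathrm{tr}(\mathbf X^\top\mathbf Q\boldsymbol\Theta^2\mathbf Q^\top\mathbf X\,\mathrm{diag}(a_1,\dots,a_K))$, to be maximized over $\mathrm{St}(d,K)$. $d_F(\mathbf X,\mathbf Q)=\min_{\mathbf q\in\{1,-1\}^K}\|\mathbf X-\mathbf Q\,\mathrm{diag}(\mathbf q)\|_F$. For $\alpha\ge0$, $\mathcal A_\alpha(\mathbf X)=\alpha\mathbf X+\mathbf Q\boldsymbol\Theta^2\mathbf Q^\top\mathbf X\,\mathrm{diag}(a_1,\dots,a_K)$. If $\mathcal A_\alpha(\mathbf X)=\mathbf U\boldsymbol\Sigma\mathbf V^\top$ is a thin SVD, the residual is $\rho_\alpha(\mathbf X)=\|\mathbf X\mathbf V\boldsymbol\Sigma\mathbf V^\top-\mathcal A_\alpha(\mathbf X)\|_F$ (note $\mathbf V\boldsymbol\Sigma\mathbf V^\top=(\mathcal A_\alpha(\mathbf X)^\top\mathcal A_\alpha(\mathbf X))^{1/2}$, so this does not depend on the SVD chosen). *)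

theory Defs
  imports "HOL-Analysis.Analysis" "Jordan_Normal_Form.Matrix"
begin

definition stiefel :: "nat \<Rightarrow> nat \<Rightarrow> real mat set" where
  "stiefel d K = {X \<in> carrier_mat d K. transpose_mat X * X = 1\<^sub>m K}"

definition frob_norm :: "real mat \<Rightarrow> real" where
  "frob_norm A = sqrt (\<Sum>i<dim_row A. \<Sum>j<dim_col A. (A $$ (i,j))\<^sup>2)"

definition dist_F :: "real mat \<Rightarrow> real mat \<Rightarrow> real" where
  "dist_F X Q = Min ((\<lambda>q. frob_norm (X - Q * mat_diag (dim_col Q) (\<lambda>i. q ! i))) `
                     {q :: real list. length q = dim_col Q \<and> set q \<subseteq> {1, -1}})"

definition A_op :: "real mat \<Rightarrow> real mat \<Rightarrow> (nat \<Rightarrow> real) \<Rightarrow> real \<Rightarrow> real mat \<Rightarrow> real mat" where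
  "A_op Q Theta a \<alpha> X =
     \<alpha> \<cdot>\<^sub>m X + Q * (Theta * Theta) * transpose_mat Q * X * mat_diag (dim_col X) a"

definition psd_sqrt :: "real mat \<Rightarrow> real mat" where
  "psd_sqrt M = (THE S. S \<in> carrier_mat (dim_row M) (dim_row M) \<and> transpose_mat S = S \<and>
      (\<forall>v \<in> carrier_vec (dim_row M). 0 \<le> v \<bullet> (S *\<^sub>v v)) \<and> S * S = M)"

text \<open>Residual rho_alpha(X) = ||X (A^T A)^{1/2} - A||_F with A = A_alpha(X)
  (equal to ||X V Sigma V^T - A||_F for any thin SVD A = U Sigma V^T).\<close>
definition rho :: "real mat \<Rightarrow> real mat \<Rightarrow> (nat \<Rightarrow> real) \<Rightarrow> real \<Rightarrow> real mat \<Rightarrow> real" where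
  "rho Q Theta a \<alpha> X =
     (let A = A_op Q Theta a \<alpha> X in frob_norm (X * psd_sqrt (transpose_mat A * A) - A))"

end

theory Submission
  imports Defs "Jordan_Normal_Form.Spectral_Radius" "Jordan_Normal_Form.Determinant"
begin

lemma mult_entry:
  "A \<in> carrier_mat n p \<Longrightarrow> B \<in> carrier_mat p q \<Longrightarrow> i < n \<Longrightarrow> j < q \<Longrightarrow>
   (A * B) $$ (i,j) = (\<Sum>k<p. A $$ (i,k) * B $$ (k,j))"
  by (auto simp add: index_mult_mat scalar_prod_def atLeast0LessThan intro!: sum.cong)

lemma mult_vec_entry:
  "A \<in> carrier_mat n p \<Longrightarrow> v \<in> carrier_vec p \<Longrightarrow> i < n \<Longrightarrow> (A *\<^sub>v v) $ i = (\<Sum>k<p. A $$ (i,k) * v $ k)"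
  by (auto simp add: scalar_prod_def atLeast0LessThan intro!: sum.cong)

lemma row_scalar:
  "A \<in> carrier_mat n p \<Longrightarrow> w \<in> carrier_vec p \<Longrightarrow> i < n \<Longrightarrow> Matrix.row A i \<bullet> w = (\<Sum>k<p. A $$ (i,k) * w $ k)"
  by (auto simp add: scalar_prod_def atLeast0LessThan intro!: sum.cong)

lemma real_eigvec:
  fixes N :: "real mat"
  assumes N: "N \<in> carrier_mat m m" and m: "0 < m" and sym: "\<And>i j. i < m \<Longrightarrow> j < m \<Longrightarrow> N $$ (i,j) = N $$ (j,i)"
  shows "\<exists>\<nu> y. y \<in> carrier_vec m \<and> y \<noteq> 0\<^sub>v m \<and> N *\<^sub>v y = \<nu> \<cdot>\<^sub>v y"
proof -
  define Nc where "Nc = map_mat complex_of_real N"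
  have Nc: "Nc \<in> carrier_mat m m" using N by (simp add: Nc_def)
  from spectrum_non_empty[OF Nc m] obtain \<mu> where "eigenvalue Nc \<mu>" by (auto simp: spectrum_def)
  then obtain v where ev: "eigenvector Nc v \<mu>" by (auto simp: eigenvalue_def)
  hence v: "v \<in> carrier_vec m" and v0: "v \<noteq> 0\<^sub>v m" and eq: "Nc *\<^sub>v v = \<mu> \<cdot>\<^sub>v v"
    using Nc by (auto simp: eigenvector_def)
  have eqi: "(\<Sum>j<m. complex_of_real (N $$ (i,j)) * v $ j) = \<mu> * v $ i" if i: "i < m" for i
  proof -
    have "(Nc *\<^sub>v v) $ i = (\<Sum>j<m. Nc $$ (i,j) * v $ j)" by (rule mult_vec_entry[OF Nc v i])
    moreover have "(Nc *\<^sub>v v) $ i = \<mu> * v $ i" using eq v i by simp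
    moreover have "(\<Sum>j<m. Nc $$ (i,j) * v $ j) = (\<Sum>j<m. complex_of_real (N $$ (i,j)) * v $ j)"
      using N i by (auto simp: Nc_def intro!: sum.cong)
    ultimately show ?thesis by simp
  qed
  define s where "s = (\<Sum>i<m. cnj (v $ i) * (\<Sum>j<m. complex_of_real (N $$ (i,j)) * v $ j))"
  define r where "r = (\<Sum>i<m. cnj (v $ i) * v $ i)"
  have s1: "s = \<mu> * r" unfolding s_def r_def
    by (simp add: eqi sum_distrib_left mult.assoc mult.left_commute)
  have "cnj s = (\<Sum>i<m. v $ i * (\<Sum>j<m. complex_of_real (N $$ (i,j)) * cnj (v $ j)))"
    unfolding s_def by (simp add: sum_distrib_left)
  also have "\<dots> = (\<Sum>i<m. \<Sum>j<m. v $ i * complex_of_real (N $$ (i,j)) * cnj (v $ j))"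
    by (simp add: sum_distrib_left mult.assoc)
  also have "\<dots> = (\<Sum>j<m. \<Sum>i<m. v $ i * complex_of_real (N $$ (i,j)) * cnj (v $ j))"
    by (rule sum.swap)
  also have "\<dots> = s" unfolding s_def
    by (auto simp: sum_distrib_left sym mult.commute mult.left_commute intro!: sum.cong)
  finally have cs: "cnj s = s" .
  have rre: "r = complex_of_real (\<Sum>i<m. (cmod (v $ i))\<^sup>2)"
    unfolding r_def of_real_sum by (intro sum.cong refl) (metis complex_norm_square mult.commute)
  have "\<exists>i<m. v $ i \<noteq> 0"
  proof (rule ccontr)
    assume "\<not> ?thesis" hence "v = 0\<^sub>v m" using v by (intro eq_vecI) auto
    with v0 show False by simp
  qed
  then obtain i0 where i0: "i0 < m" "v $ i0 \<noteq> 0" by auto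
  have rpos: "(\<Sum>i<m. (cmod (v $ i))\<^sup>2) > 0"
  proof -
    have "(cmod (v $ i0))\<^sup>2 > 0" using i0 by simp
    also have "(cmod (v $ i0))\<^sup>2 \<le> (\<Sum>i<m. (cmod (v $ i))\<^sup>2)"
      by (rule member_le_sum) (use i0 in auto)
    finally show ?thesis .
  qed
  have "Im \<mu> = 0"
  proof -
    have "Im s = 0" using arg_cong[OF cs, of Im] by simp
    thus ?thesis using s1 rre rpos by simp
  qed
  define re where "re = vec m (\<lambda>i. Re (v $ i))"
  define im where "im = vec m (\<lambda>i. Im (v $ i))"
  have "N *\<^sub>v re = Re \<mu> \<cdot>\<^sub>v re"
  proof (rule eq_vecI)
    fix i assume "i < dim_vec (Re \<mu> \<cdot>\<^sub>v re)" hence i: "i < m" by (simp add: re_def)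
    have "Re (\<Sum>j<m. complex_of_real (N $$ (i,j)) * v $ j) = Re (\<mu> * v $ i)" using eqi[OF i] by simp
    thus "(N *\<^sub>v re) $ i = (Re \<mu> \<cdot>\<^sub>v re) $ i" using i N \<open>Im \<mu> = 0\<close>
      by (simp add: row_scalar[OF N _ i] re_def Re_sum)
  qed (use N in \<open>simp add: re_def\<close>)
  moreover have "N *\<^sub>v im = Re \<mu> \<cdot>\<^sub>v im"
  proof (rule eq_vecI)
    fix i assume "i < dim_vec (Re \<mu> \<cdot>\<^sub>v im)" hence i: "i < m" by (simp add: im_def)
    have "Im (\<Sum>j<m. complex_of_real (N $$ (i,j)) * v $ j) = Im (\<mu> * v $ i)" using eqi[OF i] by simp
    thus "(N *\<^sub>v im) $ i = (Re \<mu> \<cdot>\<^sub>v im) $ i" using i N \<open>Im \<mu> = 0\<close>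
      by (simp add: row_scalar[OF N _ i] im_def Im_sum)
  qed (use N in \<open>simp add: im_def\<close>)
  moreover have "re \<noteq> 0\<^sub>v m \<or> im \<noteq> 0\<^sub>v m"
  proof (rule ccontr)
    assume "\<not> ?thesis"
    hence "re $ i0 = 0" "im $ i0 = 0" using i0 by auto
    hence "v $ i0 = 0" using i0 by (simp add: re_def im_def complex_eq_iff)
    with i0 show False by simp
  qed
  moreover have "re \<in> carrier_vec m" "im \<in> carrier_vec m" by (auto simp: re_def im_def)
  ultimately show ?thesis by blast
qed

lemma sum_shift_split:
  fixes f :: "nat \<Rightarrow> 'a::comm_monoid_add"
  assumes "k \<le> n"
  shows "(\<Sum>j<n. f j) = (\<Sum>j<k. f j) + (\<Sum>j<n-k. f (j+k))"
proof -
  have e: "{..<n} = {..<k} \<union> {k..<n}" using assms by auto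
  have "(\<Sum>j<n. f j) = (\<Sum>j<k. f j) + (\<Sum>j\<in>{k..<n}. f j)"
    unfolding e by (rule sum.union_disjoint) auto
  also have "(\<Sum>j\<in>{k..<n}. f j) = (\<Sum>j\<in>{0+k..<(n-k)+k}. f j)" using assms by simp
  also have "\<dots> = (\<Sum>j\<in>{0..<n-k}. f (j+k))" by (rule sum.shift_bounds_nat_ivl)
  finally show ?thesis by (simp add: atLeast0LessThan)
qed

lemma transpose_sym_entry:
  "transpose_mat M = M \<Longrightarrow> M \<in> carrier_mat n n \<Longrightarrow> i < n \<Longrightarrow> j < n \<Longrightarrow> M $$ (i,j) = M $$ (j,i)"
  by (metis carrier_matD index_transpose_mat(1))

lemma spectral_step:
  fixes M Z :: "real mat"
  assumes M: "M \<in> carrier_mat n n" and Msym: "transpose_mat M = M"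
    and Z: "Z \<in> carrier_mat n n" and ZZ: "transpose_mat Z * Z = 1\<^sub>m n"
    and inv: "\<forall>i<k. \<forall>j<n. j \<noteq> i \<longrightarrow> (transpose_mat Z * M * Z) $$ (j,i) = 0"
    and k: "k < n"
  shows "\<exists>Z'. Z' \<in> carrier_mat n n \<and> transpose_mat Z' * Z' = 1\<^sub>m n \<and>
     (\<forall>i<Suc k. \<forall>j<n. j \<noteq> i \<longrightarrow> (transpose_mat Z' * M * Z') $$ (j,i) = 0)"
proof -
  define B where "B = transpose_mat Z * M * Z"
  have B: "B \<in> carrier_mat n n" using M Z by (simp add: B_def)
  have BT: "transpose_mat B = B"
  proof -
    have "transpose_mat B = transpose_mat Z * transpose_mat (transpose_mat Z * M)"
      unfolding B_def by (rule transpose_mult[of _ n n _ n]) (use M Z in auto)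
    also have "transpose_mat (transpose_mat Z * M) = transpose_mat M * Z"
      by (subst transpose_mult[of _ n n _ n]) (use M Z in auto)
    finally show ?thesis unfolding B_def Msym using M Z by (simp add: assoc_mult_mat[of _ n n _ n _ n])
  qed
  have Bsym: "\<And>i j. i < n \<Longrightarrow> j < n \<Longrightarrow> B $$ (i,j) = B $$ (j,i)"
    using transpose_sym_entry[OF BT B] .
  have Bz: "B $$ (j,i) = 0" "B $$ (i,j) = 0" if "i < k" "j < n" "j \<noteq> i" for i j
    using inv that Bsym[of i j] k unfolding B_def by auto
  define m where "m = n - k"
  have m: "0 < m" using k by (simp add: m_def)
  define N where "N = mat m m (\<lambda>(i,j). B $$ (i+k, j+k))"
  have N: "N \<in> carrier_mat m m" by (simp add: N_def)
  have Nsym: "N $$ (i,j) = N $$ (j,i)" if "i < m" "j < m" for i j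
    using that Bsym[of "i+k" "j+k"] by (simp add: N_def m_def)
  obtain \<nu> y where y: "y \<in> carrier_vec m" and y0: "y \<noteq> 0\<^sub>v m" and Ny: "N *\<^sub>v y = \<nu> \<cdot>\<^sub>v y"
    using real_eigvec[OF N m Nsym] by blast
  have Nyi: "(\<Sum>j<m. B $$ (i+k, j+k) * y $ j) = \<nu> * y $ i" if "i < m" for i
  proof -
    have "(N *\<^sub>v y) $ i = (\<Sum>j<m. N $$ (i,j) * y $ j)" by (rule mult_vec_entry[OF N y that])
    moreover have "(N *\<^sub>v y) $ i = \<nu> * y $ i" using Ny y that by simp
    ultimately show ?thesis using that by (simp add: N_def)
  qed
  define s where "s = (\<Sum>i<m. (y $ i)\<^sup>2)"
  have "\<exists>i<m. y $ i \<noteq> 0"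
  proof (rule ccontr)
    assume "\<not> ?thesis" hence "y = 0\<^sub>v m" using y by (intro eq_vecI) auto
    with y0 show False by simp
  qed
  then obtain i0 where i0: "i0 < m" "y $ i0 \<noteq> 0" by auto
  have spos: "s > 0"
  proof -
    have "(y $ i0)\<^sup>2 > 0" using i0 by simp
    also have "(y $ i0)\<^sup>2 \<le> s" unfolding s_def by (rule member_le_sum) (use i0 in auto)
    finally show ?thesis .
  qed
  define nr where "nr = sqrt s"
  have nr: "nr > 0" "nr * nr = s" using spos by (auto simp: nr_def)
  define u where "u = vec n (\<lambda>i. if i < k then 0 else y $ (i-k) / nr)"
  have u: "u \<in> carrier_vec n" by (simp add: u_def)
  have uk: "u $ (j+k) = y $ j / nr" if "j < m" for j using that by (simp add: u_def m_def)
  have ulow: "u $ j = 0" if "j < k" for j using that k by (simp add: u_def)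
  have uu: "(\<Sum>i<n. (u $ i)\<^sup>2) = 1"
  proof -
    have "(\<Sum>i<n. (u $ i)\<^sup>2) = (\<Sum>i<k. (u $ i)\<^sup>2) + (\<Sum>i<m. (u $ (i+k))\<^sup>2)"
      unfolding m_def by (rule sum_shift_split) (use k in simp)
    also have "\<dots> = (\<Sum>i<m. (y $ i)\<^sup>2 / s)"
      by (simp add: ulow uk power_divide nr(2)[symmetric] power2_eq_square)
    also have "\<dots> = 1" using spos by (simp add: s_def[symmetric] sum_divide_distrib[symmetric])
    finally show ?thesis .
  qed
  have Bu: "(\<Sum>j<n. B $$ (i,j) * u $ j) = \<nu> * u $ i" if i: "i < n" for i
  proof -
    have "(\<Sum>j<n. B $$ (i,j) * u $ j) = (\<Sum>j<k. B $$ (i,j) * u $ j) + (\<Sum>j<m. B $$ (i,j+k) * u $ (j+k))"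
      unfolding m_def by (rule sum_shift_split) (use k in simp)
    also have "\<dots> = (\<Sum>j<m. B $$ (i,j+k) * y $ j) / nr"
      by (simp add: ulow uk sum_divide_distrib)
    finally have eq: "(\<Sum>j<n. B $$ (i,j) * u $ j) = (\<Sum>j<m. B $$ (i,j+k) * y $ j) / nr" .
    show ?thesis
    proof (cases "i < k")
      case True
      have "(\<Sum>j<m. B $$ (i,j+k) * y $ j) = 0"
        by (rule sum.neutral) (use True Bz m_def in auto)
      then show ?thesis using eq True ulow by simp
    next
      case False
      then obtain i' where i': "i = i' + k" "i' < m" using i unfolding m_def
        by (metis add.commute le_add_diff_inverse less_diff_conv not_less)
      show ?thesis using eq Nyi[OF i'(2)] uk[OF i'(2)] i' by simp
    qed
  qed
  define w where "w = (\<lambda>i. (if i = k then 1 else 0) - u $ i)"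
  define ww where "ww = (\<Sum>i<n. (w i)\<^sup>2)"
  define c where "c = 2 / ww"
  have wlow: "w j = 0" if "j < k" for j using that ulow by (simp add: w_def)
  have ww_eq: "ww = 2 * (1 - u $ k)"
  proof -
    have "ww = (\<Sum>i<n. (if i = k then 1 else 0) - (if i = k then 2 * u $ i else 0) + (u $ i)\<^sup>2)"
      unfolding ww_def w_def by (intro sum.cong refl) (auto simp: power2_eq_square algebra_simps)
    also have "\<dots> = 1 - 2 * u $ k + 1"
      using k uu by (simp add: sum.distrib sum_subtractf sum.delta)
    finally show ?thesis by simp
  qed
  define H where "H = mat n n (\<lambda>(i,j). (if i = j then 1 else 0) - c * w i * w j)"
  have H: "H \<in> carrier_mat n n" by (simp add: H_def)
  have HT: "transpose_mat H = H" by (rule eq_matI) (auto simp: H_def)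
  have cww: "c * c * ww = 2 * c"
    by (cases "ww = 0") (auto simp: c_def field_simps)
  have HH: "H * H = 1\<^sub>m n"
  proof (rule eq_matI)
    fix i j assume ij: "i < dim_row (1\<^sub>m n :: real mat)" "j < dim_col (1\<^sub>m n :: real mat)"
    hence i: "i < n" and j: "j < n" by auto
    have "(H * H) $$ (i,j) = (\<Sum>l<n. H $$ (i,l) * H $$ (l,j))" by (rule mult_entry[OF H H i j])
    also have "\<dots> = (\<Sum>l<n. ((if i = l then 1 else 0) - c * w i * w l) * ((if l = j then 1 else 0) - c * w l * w j))"
      using i j by (intro sum.cong refl) (simp add: H_def)
    also have "\<dots> = (\<Sum>l<n. (if l = i then (if i = j then 1 else 0) else 0)
         - (if l = i then c * w l * w j else 0) - (if l = j then c * w i * w l else 0)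
         + c * c * w i * w j * (w l)\<^sup>2)"
      by (intro sum.cong refl) (auto simp: algebra_simps power2_eq_square)
    also have "\<dots> = (if i = j then 1 else 0) - c * w i * w j - c * w i * w j + c * c * w i * w j * ww"
      using i j by (simp add: sum.distrib sum_subtractf ww_def sum_distrib_left[symmetric] sum.delta)
    also have "\<dots> = (if i = j then 1 else 0) + w i * w j * (c * c * ww - 2 * c)" by (simp add: algebra_simps)
    also have "\<dots> = (if i = j then 1 else 0)" using cww by simp
    finally show "(H * H) $$ (i,j) = 1\<^sub>m n $$ (i,j)" using i j by simp
  qed (use H in auto)
  have Hlow: "H $$ (j,i) = (if j = i then 1 else 0)" if "i < k" "j < n" for i j
    using that k by (simp add: H_def wlow)
  have Hk: "H $$ (j,k) = u $ j" if j: "j < n" for j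
  proof (cases "ww = 0")
    case True
    hence "c = 0" by (simp add: c_def)
    moreover have "u $ j = (if j = k then 1 else 0)"
    proof -
      have "\<forall>i\<in>{..<n}. (w i)\<^sup>2 = 0" using True unfolding ww_def
        by (subst sum_nonneg_eq_0_iff[symmetric]) auto
      hence "w j = 0" using j by auto
      thus ?thesis by (auto simp: w_def)
    qed
    ultimately show ?thesis using j k by (simp add: H_def)
  next
    case False
    have "c * w k = 1" using False ww_eq by (simp add: c_def w_def)
    have "H $$ (j,k) = (if j = k then 1 else 0) - w j * (c * w k)" using j k by (simp add: H_def algebra_simps)
    also have "\<dots> = u $ j" using \<open>c * w k = 1\<close> by (simp add: w_def)
    finally show ?thesis .
  qed
  define Z' where "Z' = Z * H"
  have Z': "Z' \<in> carrier_mat n n" using Z H by (simp add: Z'_def)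
  have Z'T: "transpose_mat (Z * H) = H * transpose_mat Z"
    using transpose_mult[OF Z H] HT by simp
  have "transpose_mat Z' * Z' = H * (transpose_mat Z * Z) * H"
    unfolding Z'_def Z'T using Z H
    by (simp add: assoc_mult_mat[of _ n n _ n _ n])
  hence ortho: "transpose_mat Z' * Z' = 1\<^sub>m n" using ZZ HH H by simp
  have B': "transpose_mat Z' * M * Z' = H * B * H"
    unfolding Z'_def Z'T B_def using Z H M
    by (simp add: assoc_mult_mat[of _ n n _ n _ n])
  have HB: "H * B \<in> carrier_mat n n" using H B by simp
  have entry: "(H * B * H) $$ (j,i) = (\<Sum>b<n. H $$ (j,b) * (\<Sum>a<n. B $$ (b,a) * H $$ (a,i)))"
    if "i < n" "j < n" for i j
  proof -
    have "(H * B * H) $$ (j,i) = (\<Sum>a<n. (H * B) $$ (j,a) * H $$ (a,i))"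
      by (rule mult_entry[OF HB H that(2) that(1)])
    also have "\<dots> = (\<Sum>a<n. (\<Sum>b<n. H $$ (j,b) * B $$ (b,a)) * H $$ (a,i))"
      by (intro sum.cong refl) (use that in \<open>simp add: mult_entry[OF H B]\<close>)
    also have "\<dots> = (\<Sum>b<n. H $$ (j,b) * (\<Sum>a<n. B $$ (b,a) * H $$ (a,i)))"
      by (simp add: sum_distrib_right sum_distrib_left mult.assoc) (rule sum.swap)
    finally show ?thesis .
  qed
  have "\<forall>i<Suc k. \<forall>j<n. j \<noteq> i \<longrightarrow> (transpose_mat Z' * M * Z') $$ (j,i) = 0"
  proof (intro allI impI)
    fix i j assume i: "i < Suc k" and j: "j < n" and ji: "j \<noteq> i"
    have ii: "i < n" using i k by simp
    show "(transpose_mat Z' * M * Z') $$ (j,i) = 0"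
    proof (cases "i < k")
      case True
      have inner: "(\<Sum>a<n. B $$ (b,a) * H $$ (a,i)) = (if b = i then B $$ (i,i) else 0)" if b: "b < n" for b
      proof -
        have "(\<Sum>a<n. B $$ (b,a) * H $$ (a,i)) = (\<Sum>a<n. if a = i then B $$ (b,i) else 0)"
          by (intro sum.cong refl) (use True Hlow in auto)
        also have "\<dots> = B $$ (b,i)" using ii by simp
        also have "\<dots> = (if b = i then B $$ (i,i) else 0)" using Bz[OF True b] by auto
        finally show ?thesis .
      qed
      have "(H * B * H) $$ (j,i) = (\<Sum>b<n. H $$ (j,b) * (if b = i then B $$ (i,i) else 0))"
        using entry[OF ii j] inner by simp
      also have "\<dots> = H $$ (j,i) * B $$ (i,i)"
        using ii by (simp add: if_distrib[of "\<lambda>x. H $$ (j,_) * x"] cong: if_cong)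
      also have "\<dots> = 0" using Hlow[OF True j] ji by simp
      finally show ?thesis using B' by simp
    next
      case False
      hence ik: "i = k" using i by simp
      have inner: "(\<Sum>a<n. B $$ (b,a) * H $$ (a,i)) = \<nu> * H $$ (b,k)" if b: "b < n" for b
        using Bu[OF b] Hk b ik by (simp add: Hk)
      have "(H * B * H) $$ (j,i) = \<nu> * (\<Sum>b<n. H $$ (j,b) * H $$ (b,k))"
        using entry[OF ii j] inner by (simp add: sum_distrib_left mult.left_commute)
      also have "(\<Sum>b<n. H $$ (j,b) * H $$ (b,k)) = (H * H) $$ (j,k)"
        by (rule mult_entry[OF H H j k, symmetric])
      also have "\<dots> = 0" using HH j k ji ik by simp
      finally show ?thesis using B' by simp
    qed
  qed
  thus ?thesis using Z' ortho by blast
qed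

lemma spectral:
  fixes M :: "real mat"
  assumes M: "M \<in> carrier_mat n n" and Msym: "transpose_mat M = M"
  shows "\<exists>Z. Z \<in> carrier_mat n n \<and> transpose_mat Z * Z = 1\<^sub>m n \<and>
     (\<forall>i<n. \<forall>j<n. j \<noteq> i \<longrightarrow> (transpose_mat Z * M * Z) $$ (j,i) = 0)"
proof -
  have "k \<le> n \<Longrightarrow> \<exists>Z. Z \<in> carrier_mat n n \<and> transpose_mat Z * Z = 1\<^sub>m n \<and>
     (\<forall>i<k. \<forall>j<n. j \<noteq> i \<longrightarrow> (transpose_mat Z * M * Z) $$ (j,i) = 0)" for k
  proof (induction k)
    case 0
    show ?case by (intro exI[of _ "1\<^sub>m n"]) auto
  next
    case (Suc k)
    then obtain Z where "Z \<in> carrier_mat n n" "transpose_mat Z * Z = 1\<^sub>m n"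
      "\<forall>i<k. \<forall>j<n. j \<noteq> i \<longrightarrow> (transpose_mat Z * M * Z) $$ (j,i) = 0" by auto
    from spectral_step[OF M Msym this] Suc.prems show ?case by simp
  qed
  thus ?thesis by blast
qed

definition qf :: "nat \<Rightarrow> real mat \<Rightarrow> (nat \<Rightarrow> real) \<Rightarrow> real" where
  "qf n S f = (\<Sum>a<n. \<Sum>b<n. f a * S $$ (a,b) * f b)"

lemma qf_vec:
  assumes S: "S \<in> carrier_mat n n" and v: "v \<in> carrier_vec n"
  shows "v \<bullet> (S *\<^sub>v v) = qf n S (\<lambda>i. v $ i)"
proof -
  have "v \<bullet> (S *\<^sub>v v) = (\<Sum>a<n. v $ a * (S *\<^sub>v v) $ a)"
    using S v by (simp add: scalar_prod_def atLeast0LessThan)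
  also have "\<dots> = (\<Sum>a<n. v $ a * (\<Sum>b<n. S $$ (a,b) * v $ b))"
    by (intro sum.cong refl) (simp add: mult_vec_entry[OF S v])
  finally show ?thesis by (simp add: qf_def sum_distrib_left mult.assoc)
qed

lemma psd_qf:
  assumes S: "S \<in> carrier_mat n n" and psd: "\<forall>v\<in>carrier_vec n. 0 \<le> v \<bullet> (S *\<^sub>v v)"
  shows "0 \<le> qf n S f"
proof -
  have "0 \<le> vec n f \<bullet> (S *\<^sub>v vec n f)" using psd by simp
  also have "\<dots> = qf n S (\<lambda>i. vec n f $ i)" by (rule qf_vec[OF S]) simp
  also have "\<dots> = qf n S f" unfolding qf_def by (intro sum.cong refl) auto
  finally show ?thesis .
qed

lemma psd_zero:
  fixes S :: "real mat"
  assumes sym: "\<And>a b. a < n \<Longrightarrow> b < n \<Longrightarrow> S $$ (a,b) = S $$ (b,a)"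
    and psd: "\<And>f. 0 \<le> qf n S f" and q0: "qf n S x = 0" and a: "a < n"
  shows "(\<Sum>b<n. S $$ (a,b) * x b) = 0"
proof -
  define u where "u = (\<lambda>a. \<Sum>b<n. S $$ (a,b) * x b)"
  define U where "U = (\<Sum>a<n. (u a)\<^sup>2)"
  define R where "R = qf n S u"
  have R: "R \<ge> 0" using psd by (simp add: R_def)
  have exp: "qf n S (\<lambda>a. x a + t * u a) = 2 * t * U + t\<^sup>2 * R" for t
  proof -
    have "qf n S (\<lambda>a. x a + t * u a) = qf n S x + t * (\<Sum>a<n. \<Sum>b<n. u a * S $$ (a,b) * x b)
       + t * (\<Sum>a<n. \<Sum>b<n. x a * S $$ (a,b) * u b) + t\<^sup>2 * qf n S u"
      unfolding qf_def
      by (simp add: sum.distrib sum_distrib_left algebra_simps power2_eq_square)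
    also have "(\<Sum>a<n. \<Sum>b<n. u a * S $$ (a,b) * x b) = U"
      unfolding U_def u_def by (simp add: sum_distrib_left mult.assoc power2_eq_square)
    also have "(\<Sum>a<n. \<Sum>b<n. x a * S $$ (a,b) * u b) = (\<Sum>b<n. \<Sum>a<n. x a * S $$ (a,b) * u b)"
      by (rule sum.swap)
    also have "\<dots> = (\<Sum>b<n. u b * (\<Sum>a<n. S $$ (b,a) * x a))"
      by (intro sum.cong refl) (auto simp: sum_distrib_left sym mult.commute mult.left_commute)
    also have "\<dots> = U" unfolding U_def u_def by (simp add: power2_eq_square)
    finally show ?thesis using q0 R_def by simp
  qed
  have "U = 0"
  proof (rule ccontr)
    assume "U \<noteq> 0"
    hence Upos: "U > 0" unfolding U_def by (metis sum_nonneg zero_le_power2 order_le_neq_trans)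
    define t where "t = - U / (R + 1)"
    have R1: "R + 1 > 0" using R by linarith
    have tneg: "t < 0" unfolding t_def using Upos R1 by (simp add: divide_neg_pos)
    have "R / (R + 1) \<le> 1" using R1 by simp
    hence "U * (R / (R + 1)) \<le> U * 1" using Upos by (intro mult_left_mono) auto
    moreover have "t * R = - (U * (R / (R + 1)))" by (simp add: t_def)
    ultimately have "2 * U + t * R > 0" using Upos by linarith
    hence "t * (2 * U + t * R) < 0" using tneg by (simp add: mult_neg_pos)
    moreover have "2 * t * U + t\<^sup>2 * R = t * (2 * U + t * R)" by (simp add: algebra_simps power2_eq_square)
    ultimately have "2 * t * U + t\<^sup>2 * R < 0" by simp
    hence "qf n S (\<lambda>a. x a + t * u a) < 0" using exp by simp
    with psd show False by (metis not_le)
  qed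
  hence "\<forall>a\<in>{..<n}. (u a)\<^sup>2 = 0" unfolding U_def by (subst sum_nonneg_eq_0_iff[symmetric]) auto
  thus ?thesis using a by (simp add: u_def)
qed

definition mtr :: "nat \<Rightarrow> real mat \<Rightarrow> real" where
  "mtr n A = (\<Sum>i<n. A $$ (i,i))"

lemma mtr_comm:
  assumes A: "A \<in> carrier_mat n p" and B: "B \<in> carrier_mat p n"
  shows "mtr n (A * B) = mtr p (B * A)"
proof -
  have "mtr n (A * B) = (\<Sum>i<n. \<Sum>k<p. A $$ (i,k) * B $$ (k,i))"
    unfolding mtr_def by (intro sum.cong refl) (simp add: mult_entry[OF A B])
  also have "\<dots> = (\<Sum>k<p. \<Sum>i<n. B $$ (k,i) * A $$ (i,k))"
    by (subst sum.swap) (simp add: mult.commute)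
  also have "\<dots> = mtr p (B * A)"
    unfolding mtr_def by (intro sum.cong refl) (simp add: mult_entry[OF B A])
  finally show ?thesis .
qed

lemma mtr_add:
  "A \<in> carrier_mat n n \<Longrightarrow> B \<in> carrier_mat n n \<Longrightarrow> mtr n (A + B) = mtr n A + mtr n B"
  unfolding mtr_def by (simp add: sum.distrib)

lemma mtr_quad:
  assumes D: "D \<in> carrier_mat n n" and S: "S \<in> carrier_mat n n"
    and Dsym: "\<And>a b. a < n \<Longrightarrow> b < n \<Longrightarrow> D $$ (a,b) = D $$ (b,a)"
  shows "mtr n (D * (S * D)) = (\<Sum>i<n. qf n S (\<lambda>a. D $$ (a,i)))"
proof -
  have SD: "S * D \<in> carrier_mat n n" using S D by simp
  have "mtr n (D * (S * D)) = (\<Sum>i<n. \<Sum>a<n. D $$ (i,a) * (\<Sum>b<n. S $$ (a,b) * D $$ (b,i)))"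
    unfolding mtr_def
    by (intro sum.cong refl) (simp add: mult_entry[OF D SD] mult_entry[OF S D])
  also have "\<dots> = (\<Sum>i<n. qf n S (\<lambda>a. D $$ (a,i)))"
    unfolding qf_def
    by (intro sum.cong refl) (auto simp: sum_distrib_left mult.assoc Dsym)
  finally show ?thesis .
qed

lemma psd_sqrt_unique:
  fixes S T :: "real mat"
  assumes S: "S \<in> carrier_mat n n" and T: "T \<in> carrier_mat n n"
    and Ssym: "\<And>a b. a < n \<Longrightarrow> b < n \<Longrightarrow> S $$ (a,b) = S $$ (b,a)"
    and Tsym: "\<And>a b. a < n \<Longrightarrow> b < n \<Longrightarrow> T $$ (a,b) = T $$ (b,a)"
    and Spsd: "\<And>f. 0 \<le> qf n S f" and Tpsd: "\<And>f. 0 \<le> qf n T f"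
    and eq: "S * S = T * T"
  shows "S = T"
proof -
  define D where "D = S - T"
  have D: "D \<in> carrier_mat n n" using S T by (simp add: D_def minus_carrier_mat)
  have Dij: "D $$ (i,j) = S $$ (i,j) - T $$ (i,j)" if "i < n" "j < n" for i j
    using that S T by (simp add: D_def)
  have Dsym: "D $$ (a,b) = D $$ (b,a)" if "a < n" "b < n" for a b
    using that Ssym Tsym Dij by simp
  define E where "E = S * D + D * T"
  have E0: "E = 0\<^sub>m n n"
  proof (rule eq_matI)
    fix i j assume "i < dim_row (0\<^sub>m n n :: real mat)" "j < dim_col (0\<^sub>m n n :: real mat)"
    hence i: "i < n" and j: "j < n" by auto
    have "E $$ (i,j) = (S * D) $$ (i,j) + (D * T) $$ (i,j)"
      unfolding E_def using S D T i j by simp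
    also have "\<dots> = (\<Sum>l<n. S $$ (i,l) * D $$ (l,j)) + (\<Sum>l<n. D $$ (i,l) * T $$ (l,j))"
      by (simp only: mult_entry[OF S D i j] mult_entry[OF D T i j])
    also have "\<dots> = (\<Sum>l<n. S $$ (i,l) * S $$ (l,j)) - (\<Sum>l<n. T $$ (i,l) * T $$ (l,j))"
      using i j by (simp add: Dij algebra_simps sum.distrib sum_subtractf)
    also have "\<dots> = (S * S) $$ (i,j) - (T * T) $$ (i,j)"
      by (simp add: mult_entry[OF S S i j] mult_entry[OF T T i j])
    also have "\<dots> = 0" using eq by simp
    finally show "E $$ (i,j) = 0\<^sub>m n n $$ (i,j)" using i j by simp
  qed (use S D T in \<open>auto simp: E_def\<close>)
  have "mtr n (D * E) = 0" using E0 D by (simp add: mtr_def)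
  moreover have "D * E = D * (S * D) + D * (D * T)"
    unfolding E_def using S D T by (intro mult_add_distrib_mat[of _ n n]) auto
  moreover have "mtr n (D * (D * T)) = mtr n (D * (T * D))"
  proof -
    have "mtr n (D * (D * T)) = mtr n ((D * T) * D)" by (rule mtr_comm) (use D T in auto)
    also have "(D * T) * D = D * (T * D)" using D T by (simp add: assoc_mult_mat[of _ n n _ n _ n])
    finally show ?thesis .
  qed
  ultimately have sum0: "mtr n (D * (S * D)) + mtr n (D * (T * D)) = 0"
    using D S T by (simp add: mtr_add)
  have qS: "qf n S (\<lambda>a. D $$ (a,i)) = 0" and qT: "qf n T (\<lambda>a. D $$ (a,i)) = 0" if i: "i < n" for i
  proof -
    have A: "(\<Sum>i<n. qf n S (\<lambda>a. D $$ (a,i))) + (\<Sum>i<n. qf n T (\<lambda>a. D $$ (a,i))) = 0"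
      using sum0 mtr_quad[OF D S Dsym] mtr_quad[OF D T Dsym] by simp
    have "(\<Sum>i<n. qf n S (\<lambda>a. D $$ (a,i)) + qf n T (\<lambda>a. D $$ (a,i))) = 0"
      using A by (simp add: sum.distrib)
    hence "\<forall>i\<in>{..<n}. qf n S (\<lambda>a. D $$ (a,i)) + qf n T (\<lambda>a. D $$ (a,i)) = 0"
      by (subst sum_nonneg_eq_0_iff[symmetric]) (auto intro: add_nonneg_nonneg Spsd Tpsd)
    hence "qf n S (\<lambda>a. D $$ (a,i)) + qf n T (\<lambda>a. D $$ (a,i)) = 0" using i by auto
    thus "qf n S (\<lambda>a. D $$ (a,i)) = 0" "qf n T (\<lambda>a. D $$ (a,i)) = 0"
      using Spsd[of "\<lambda>a. D $$ (a,i)"] Tpsd[of "\<lambda>a. D $$ (a,i)"] by linarith+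
  qed
  have DD: "(\<Sum>b<n. D $$ (a,b) * D $$ (b,i)) = 0" if a: "a < n" and i: "i < n" for a i
  proof -
    have "(\<Sum>b<n. D $$ (a,b) * D $$ (b,i)) = (\<Sum>b<n. S $$ (a,b) * D $$ (b,i)) - (\<Sum>b<n. T $$ (a,b) * D $$ (b,i))"
      using a by (simp add: Dij algebra_simps sum_subtractf)
    also have "\<dots> = 0"
      using psd_zero[OF Ssym Spsd qS[OF i] a] psd_zero[OF Tsym Tpsd qT[OF i] a] by simp
    finally show ?thesis .
  qed
  have "(\<Sum>i<n. \<Sum>b<n. (D $$ (i,b))\<^sup>2) = (\<Sum>i<n. \<Sum>b<n. D $$ (i,b) * D $$ (b,i))"
    by (intro sum.cong refl) (simp add: Dsym power2_eq_square)
  also have "\<dots> = 0" using DD by simp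
  finally have "(\<Sum>i<n. \<Sum>b<n. (D $$ (i,b))\<^sup>2) = 0" .
  hence "\<forall>i\<in>{..<n}. (\<Sum>b<n. (D $$ (i,b))\<^sup>2) = 0"
    by (subst sum_nonneg_eq_0_iff[symmetric]) (auto intro: sum_nonneg)
  hence "\<forall>i<n. \<forall>b<n. D $$ (i,b) = 0" by (simp add: sum_nonneg_eq_0_iff)
  thus ?thesis using S T Dij by (intro eq_matI) auto
qed

lemma quad_entry:
  assumes Y: "Y \<in> carrier_mat n p" and M: "M \<in> carrier_mat n n" and i: "i < p" and j: "j < p"
  shows "(transpose_mat Y * M * Y) $$ (i,j) = (\<Sum>a<n. \<Sum>b<n. Y $$ (a,i) * M $$ (a,b) * Y $$ (b,j))"
proof -
  have YM: "transpose_mat Y * M \<in> carrier_mat p n" using Y M by simp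
  have YT: "transpose_mat Y \<in> carrier_mat p n" using Y by simp
  have "(transpose_mat Y * M * Y) $$ (i,j) = (\<Sum>b<n. (transpose_mat Y * M) $$ (i,b) * Y $$ (b,j))"
    by (rule mult_entry[OF YM Y i j])
  also have "\<dots> = (\<Sum>b<n. (\<Sum>a<n. Y $$ (a,i) * M $$ (a,b)) * Y $$ (b,j))"
    by (intro sum.cong refl) (use Y i in \<open>simp add: mult_entry[OF YT M i]\<close>)
  also have "\<dots> = (\<Sum>b<n. \<Sum>a<n. Y $$ (a,i) * M $$ (a,b) * Y $$ (b,j))"
    by (simp add: sum_distrib_right)
  also have "\<dots> = (\<Sum>a<n. \<Sum>b<n. Y $$ (a,i) * M $$ (a,b) * Y $$ (b,j))"
    by (rule sum.swap)
  finally show ?thesis .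
qed

lemma transpose_diag: "transpose_mat (mat_diag n f) = mat_diag n f"
  by (rule eq_matI) (auto simp: mat_diag_def)

lemma sq_sum_expand:
  fixes x :: "nat \<Rightarrow> real"
  shows "c * (\<Sum>a<n. x a)\<^sup>2 = (\<Sum>a<n. \<Sum>b<n. c * (x a * x b))"
proof -
  have "(\<Sum>a<n. x a)\<^sup>2 = (\<Sum>a<n. \<Sum>b<n. x a * x b)"
    unfolding power2_eq_square by (rule sum_product)
  thus ?thesis by (simp add: sum_distrib_left)
qed

lemma quad_diag_psd:
  fixes Y :: "real mat"
  assumes Y: "Y \<in> carrier_mat n n" and g: "\<And>l. l < n \<Longrightarrow> g l \<ge> 0"
  shows "0 \<le> qf n (transpose_mat Y * mat_diag n g * Y) f"
proof -
  let ?S = "transpose_mat Y * mat_diag n g * Y"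
  have Sab: "?S $$ (a,b) = (\<Sum>l<n. Y $$ (l,a) * g l * Y $$ (l,b))" if "a < n" "b < n" for a b
  proof -
    have "?S $$ (a,b) = (\<Sum>l<n. \<Sum>m<n. Y $$ (l,a) * mat_diag n g $$ (l,m) * Y $$ (m,b))"
      by (rule quad_entry[OF Y mat_diag_dim that])
    also have "\<dots> = (\<Sum>l<n. \<Sum>m<n. if m = l then Y $$ (l,a) * g l * Y $$ (l,b) else 0)"
      by (intro sum.cong refl) (auto simp: mat_diag_def)
    also have "\<dots> = (\<Sum>l<n. Y $$ (l,a) * g l * Y $$ (l,b))" by simp
    finally show ?thesis .
  qed
  have "qf n ?S f = (\<Sum>a<n. \<Sum>b<n. f a * (\<Sum>l<n. Y $$ (l,a) * g l * Y $$ (l,b)) * f b)"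
    unfolding qf_def by (intro sum.cong refl) (simp add: Sab)
  also have "\<dots> = (\<Sum>a<n. \<Sum>b<n. \<Sum>l<n. g l * ((Y $$ (l,a) * f a) * (Y $$ (l,b) * f b)))"
    by (intro sum.cong refl) (simp add: sum_distrib_left sum_distrib_right mult_ac)
  also have "\<dots> = (\<Sum>a<n. \<Sum>l<n. \<Sum>b<n. g l * ((Y $$ (l,a) * f a) * (Y $$ (l,b) * f b)))"
    by (rule sum.cong[OF refl]) (rule sum.swap)
  also have "\<dots> = (\<Sum>l<n. \<Sum>a<n. \<Sum>b<n. g l * ((Y $$ (l,a) * f a) * (Y $$ (l,b) * f b)))"
    by (rule sum.swap)
  also have "\<dots> = (\<Sum>l<n. g l * (\<Sum>a<n. Y $$ (l,a) * f a)\<^sup>2)"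
    by (simp only: sq_sum_expand)
  also have "\<dots> \<ge> 0" by (intro sum_nonneg mult_nonneg_nonneg) (auto intro: g)
  finally show ?thesis .
qed

lemma psd_sqrt_exists:
  fixes M :: "real mat"
  assumes M: "M \<in> carrier_mat n n" and Msym: "transpose_mat M = M" and psd: "\<And>f. 0 \<le> qf n M f"
  shows "\<exists>S. S \<in> carrier_mat n n \<and> transpose_mat S = S \<and>
      (\<forall>v \<in> carrier_vec n. 0 \<le> v \<bullet> (S *\<^sub>v v)) \<and> S * S = M"
proof -
  obtain Z where Z: "Z \<in> carrier_mat n n" and ZZ: "transpose_mat Z * Z = 1\<^sub>m n"
    and off: "\<forall>i<n. \<forall>j<n. j \<noteq> i \<longrightarrow> (transpose_mat Z * M * Z) $$ (j,i) = 0"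
    using spectral[OF M Msym] by blast
  have ZT: "transpose_mat Z \<in> carrier_mat n n" using Z by simp
  have ZZ': "Z * transpose_mat Z = 1\<^sub>m n" by (rule mat_mult_left_right_inverse[OF ZT Z ZZ])
  define B where "B = transpose_mat Z * M * Z"
  define d where "d = (\<lambda>i. B $$ (i,i))"
  have B: "B = mat_diag n d"
  proof (rule eq_matI)
    fix i j assume "i < dim_row (mat_diag n d)" "j < dim_col (mat_diag n d)"
    hence i: "i < n" and j: "j < n" by (auto simp: mat_diag_def)
    show "B $$ (i,j) = mat_diag n d $$ (i,j)"
      using off i j by (cases "i = j") (auto simp: mat_diag_def d_def B_def)
  qed (use Z M in \<open>auto simp: B_def mat_diag_def\<close>)
  have d: "d i \<ge> 0" if i: "i < n" for i
  proof -
    have "d i = qf n M (\<lambda>a. Z $$ (a,i))"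
      unfolding d_def B_def qf_def quad_entry[OF Z M i i] by simp
    thus ?thesis using psd by simp
  qed
  have MB: "M = Z * B * transpose_mat Z"
  proof -
    have "Z * B * transpose_mat Z = (Z * transpose_mat Z) * M * (Z * transpose_mat Z)"
      unfolding B_def using Z M by (simp add: assoc_mult_mat[of _ n n _ n _ n])
    thus ?thesis using ZZ' M by simp
  qed
  define Ds where "Ds = mat_diag n (\<lambda>i. sqrt (d i))"
  have Ds: "Ds \<in> carrier_mat n n" by (simp add: Ds_def)
  define S where "S = Z * Ds * transpose_mat Z"
  have S: "S \<in> carrier_mat n n" using Z Ds by (simp add: S_def)
  have DsDs: "Ds * Ds = B"
    unfolding Ds_def B mat_diag_diag
    by (rule eq_matI) (auto simp: mat_diag_def d)
  have SS: "S * S = M"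
  proof -
    have "S * S = Z * Ds * (transpose_mat Z * Z) * Ds * transpose_mat Z"
      unfolding S_def using Z Ds by (simp add: assoc_mult_mat[of _ n n _ n _ n])
    also have "\<dots> = Z * (Ds * Ds) * transpose_mat Z"
      using ZZ Z Ds by (simp add: assoc_mult_mat[of _ n n _ n _ n])
    also have "\<dots> = M" using MB DsDs by simp
    finally show ?thesis .
  qed
  have ST: "transpose_mat S = S"
  proof -
    have "transpose_mat S = transpose_mat (transpose_mat Z) * transpose_mat (Z * Ds)"
      unfolding S_def by (rule transpose_mult) (use Z Ds in auto)
    also have "transpose_mat (Z * Ds) = transpose_mat Ds * transpose_mat Z"
      by (rule transpose_mult) (use Z Ds in auto)
    finally show ?thesis unfolding S_def Ds_def transpose_diag
      using Z by (simp add: assoc_mult_mat[of _ n n _ n _ n])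
  qed
  have Spsd: "0 \<le> v \<bullet> (S *\<^sub>v v)" if v: "v \<in> carrier_vec n" for v
  proof -
    have S': "S = transpose_mat (transpose_mat Z) * Ds * transpose_mat Z" unfolding S_def by simp
    have "v \<bullet> (S *\<^sub>v v) = qf n S (\<lambda>i. v $ i)" by (rule qf_vec[OF S v])
    also have "\<dots> \<ge> 0" unfolding S' Ds_def by (rule quad_diag_psd) (use Z d in auto)
    finally show ?thesis .
  qed
  show ?thesis using S ST Spsd SS by blast
qed

lemma psd_sqrt_props:
  fixes M :: "real mat"
  assumes M: "M \<in> carrier_mat n n" and Msym: "transpose_mat M = M"
    and psd: "\<forall>v \<in> carrier_vec n. 0 \<le> v \<bullet> (M *\<^sub>v v)"
  shows "psd_sqrt M \<in> carrier_mat n n \<and> transpose_mat (psd_sqrt M) = psd_sqrt M \<and> psd_sqrt M * psd_sqrt M = M"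
proof -
  let ?P = "\<lambda>S. S \<in> carrier_mat (dim_row M) (dim_row M) \<and> transpose_mat S = S \<and>
      (\<forall>v \<in> carrier_vec (dim_row M). 0 \<le> v \<bullet> (S *\<^sub>v v)) \<and> S * S = M"
  have dM: "dim_row M = n" using M by simp
  have psdq: "0 \<le> qf n M f" for f by (rule psd_qf[OF M psd])
  have ex: "\<exists>S. ?P S" using psd_sqrt_exists[OF M Msym psdq] unfolding dM .
  have uniq: "S = T" if "?P S" "?P T" for S T
  proof -
    have S: "S \<in> carrier_mat n n" and T: "T \<in> carrier_mat n n" using that dM by auto
    show ?thesis
    proof (rule psd_sqrt_unique[OF S T])
      show "S $$ (a,b) = S $$ (b,a)" if "a < n" "b < n" for a b
        using transpose_sym_entry[of S n a b] that \<open>?P S\<close> S by auto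
      show "T $$ (a,b) = T $$ (b,a)" if "a < n" "b < n" for a b
        using transpose_sym_entry[of T n a b] that \<open>?P T\<close> T by auto
      show "0 \<le> qf n S f" for f using psd_qf[OF S] \<open>?P S\<close> dM by auto
      show "0 \<le> qf n T f" for f using psd_qf[OF T] \<open>?P T\<close> dM by auto
      show "S * S = T * T" using \<open>?P S\<close> \<open>?P T\<close> by simp
    qed
  qed
  obtain S0 where S0: "?P S0" using ex by blast
  have "psd_sqrt M = S0" unfolding psd_sqrt_def
    by (rule the_equality) (rule S0, rule uniq[OF _ S0])
  hence "?P (psd_sqrt M)" using S0 by simp
  thus ?thesis using dM by simp
qed

definition ip :: "nat \<Rightarrow> (nat \<Rightarrow> real) \<Rightarrow> (nat \<Rightarrow> real) \<Rightarrow> real" where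
  "ip d u v = (\<Sum>r<d. u r * v r)"

abbreviation nrm :: "nat \<Rightarrow> (nat \<Rightarrow> real) \<Rightarrow> real" where
  "nrm d u \<equiv> L2_set u {..<d}"

lemma nrm_sq: "(nrm d u)\<^sup>2 = (\<Sum>r<d. (u r)\<^sup>2)"
  unfolding L2_set_def by (simp add: sum_nonneg)

lemma nrm_sq_ip: "(nrm d u)\<^sup>2 = ip d u u"
  unfolding nrm_sq ip_def by (simp add: power2_eq_square)

lemma ip_cs: "\<bar>ip d u v\<bar> \<le> nrm d u * nrm d v"
proof -
  have "\<bar>ip d u v\<bar> \<le> (\<Sum>r<d. \<bar>u r\<bar> * \<bar>v r\<bar>)"
    unfolding ip_def by (rule order_trans[OF sum_abs]) (simp add: abs_mult)
  also have "\<dots> \<le> nrm d u * nrm d v" by (rule L2_set_mult_ineq)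
  finally show ?thesis .
qed

lemma nrm_mono_sq: "(\<Sum>r<d. (u r)\<^sup>2) \<le> (\<Sum>r<d. (v r)\<^sup>2) \<Longrightarrow> nrm d u \<le> nrm d v"
  unfolding L2_set_def by simp

lemma ip_sym: "ip d u v = ip d v u"
  unfolding ip_def by (simp add: mult.commute)

lemma proj_pyth:
  fixes u :: "nat \<Rightarrow> nat \<Rightarrow> real"
  assumes orth: "\<And>i j. i < K \<Longrightarrow> j < K \<Longrightarrow> ip d (\<lambda>r. u r i) (\<lambda>r. u r j) = (if i = j then 1 else 0)"
  shows "(\<Sum>r<d. (p r - (\<Sum>k<K. u r k * ip d (\<lambda>r. u r k) p))\<^sup>2)
       = (\<Sum>r<d. (p r)\<^sup>2) - (\<Sum>k<K. (ip d (\<lambda>r. u r k) p)\<^sup>2)"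
proof -
  define \<beta> where "\<beta> = (\<lambda>k. ip d (\<lambda>r. u r k) p)"
  have mid: "(\<Sum>r<d. p r * (\<Sum>k<K. u r k * \<beta> k)) = (\<Sum>k<K. (\<beta> k)\<^sup>2)"
  proof -
    have "(\<Sum>r<d. p r * (\<Sum>k<K. u r k * \<beta> k)) = (\<Sum>r<d. \<Sum>k<K. \<beta> k * (u r k * p r))"
      by (simp add: sum_distrib_left mult_ac)
    also have "\<dots> = (\<Sum>k<K. \<beta> k * (\<Sum>r<d. u r k * p r))"
      by (subst sum.swap) (simp add: sum_distrib_left)
    also have "\<dots> = (\<Sum>k<K. (\<beta> k)\<^sup>2)" by (simp add: \<beta>_def ip_def power2_eq_square)
    finally show ?thesis .
  qed
  have last: "(\<Sum>r<d. (\<Sum>k<K. u r k * \<beta> k)\<^sup>2) = (\<Sum>k<K. (\<beta> k)\<^sup>2)"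
  proof -
    have "(\<Sum>r<d. (\<Sum>k<K. u r k * \<beta> k)\<^sup>2) = (\<Sum>r<d. \<Sum>k<K. \<Sum>l<K. \<beta> k * \<beta> l * (u r k * u r l))"
      by (intro sum.cong refl) (simp add: power2_eq_square sum_product mult_ac)
    also have "\<dots> = (\<Sum>k<K. \<Sum>r<d. \<Sum>l<K. \<beta> k * \<beta> l * (u r k * u r l))"
      by (rule sum.swap)
    also have "\<dots> = (\<Sum>k<K. \<Sum>l<K. \<Sum>r<d. \<beta> k * \<beta> l * (u r k * u r l))"
      by (rule sum.cong[OF refl]) (rule sum.swap)
    also have "\<dots> = (\<Sum>k<K. \<Sum>l<K. \<beta> k * \<beta> l * ip d (\<lambda>r. u r k) (\<lambda>r. u r l))"
      by (simp add: ip_def sum_distrib_left)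
    also have "\<dots> = (\<Sum>k<K. \<Sum>l<K. if l = k then \<beta> k * \<beta> k else 0)"
      by (intro sum.cong refl) (auto simp: orth)
    also have "\<dots> = (\<Sum>k<K. (\<beta> k)\<^sup>2)" by (simp add: power2_eq_square)
    finally show ?thesis .
  qed
  have "(\<Sum>r<d. (p r - (\<Sum>k<K. u r k * \<beta> k))\<^sup>2)
     = (\<Sum>r<d. (p r)\<^sup>2) - 2 * (\<Sum>r<d. p r * (\<Sum>k<K. u r k * \<beta> k)) + (\<Sum>r<d. (\<Sum>k<K. u r k * \<beta> k)\<^sup>2)"
    by (simp add: power2_diff sum.distrib sum_subtractf sum_distrib_left mult.assoc)
  also have "\<dots> = (\<Sum>r<d. (p r)\<^sup>2) - (\<Sum>k<K. (\<beta> k)\<^sup>2)" using mid last by simp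
  finally show ?thesis by (simp add: \<beta>_def)
qed

lemma ip_sum_right: "ip d u (\<lambda>r. \<Sum>k<K. f k r) = (\<Sum>k<K. ip d u (f k))"
  unfolding ip_def by (simp add: sum_distrib_left) (rule sum.swap)

lemma ip_sum_left: "ip d (\<lambda>r. \<Sum>k<K. f k r) u = (\<Sum>k<K. ip d (f k) u)"
  unfolding ip_def by (simp add: sum_distrib_right) (rule sum.swap)

lemma ip_diff_right: "ip d u (\<lambda>r. f r - g r) = ip d u f - ip d u g"
  unfolding ip_def by (simp add: algebra_simps sum_subtractf)

lemma ip_add_right: "ip d u (\<lambda>r. f r + g r) = ip d u f + ip d u g"
  unfolding ip_def by (simp add: algebra_simps sum.distrib)

lemma ip_scale_right: "ip d u (\<lambda>r. t * f r) = t * ip d u f"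
  unfolding ip_def sum_distrib_left by (intro sum.cong refl) (simp add: mult_ac)

lemma ip_scale_right2: "ip d u (\<lambda>r. f r * t) = ip d u f * t"
  unfolding ip_def sum_distrib_right by (intro sum.cong refl) (simp add: mult_ac)

locale core =
  fixes d K :: nat and x q :: "nat \<Rightarrow> nat \<Rightarrow> real" and lam a :: "nat \<Rightarrow> real"
    and P :: "nat \<Rightarrow> nat \<Rightarrow> real" and \<alpha> :: real
  assumes ox: "\<And>i j. i < K \<Longrightarrow> j < K \<Longrightarrow> ip d (\<lambda>r. x r i) (\<lambda>r. x r j) = (if i = j then 1 else 0)"
    and oq: "\<And>i j. i < K \<Longrightarrow> j < K \<Longrightarrow> ip d (\<lambda>r. q r i) (\<lambda>r. q r j) = (if i = j then 1 else 0)"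
    and Psym: "\<And>i j. i < K \<Longrightarrow> j < K \<Longrightarrow> P i j = P j i"
begin

definition "c i j = ip d (\<lambda>r. q r i) (\<lambda>r. x r j)"
definition "E r j = x r j - q r j"
definition "S i j = ip d (\<lambda>r. q r i) (\<lambda>r. E r j)"
definition "G i j = (\<Sum>l<K. lam l * c l i * c l j)"
definition "m r j = (\<Sum>l<K. (lam l * c l j) * q r l)"
definition "Y r j = (\<Sum>k<K. x r k * P k j) - (\<alpha> * x r j + a j * m r j)"
definition "z r j = m r j - (\<Sum>k<K. x r k * G k j)"
definition "W r j = x r j - (\<Sum>i<K. q r i * c i j)"

lemma c_S: "i < K \<Longrightarrow> j < K \<Longrightarrow> c i j = S i j + (if i = j then 1 else 0)"
proof -
  assume ij: "i < K" "j < K"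
  have "c i j = ip d (\<lambda>r. q r i) (\<lambda>r. E r j + q r j)" unfolding c_def E_def by simp
  also have "\<dots> = S i j + (if i = j then 1 else 0)" unfolding ip_add_right S_def using oq[OF ij] by simp
  finally show ?thesis .
qed

lemma G_sym: "G i j = G j i"
  unfolding G_def by (simp add: mult_ac)

lemma sum_delta_col: "j < K \<Longrightarrow> (\<Sum>k<K. f k * (if k = j then 1 else 0)) = (f j :: real)"
  by (simp add: if_distrib[of "\<lambda>t. f _ * t"] cong: if_cong)

lemma ip_x_m: "i < K \<Longrightarrow> j < K \<Longrightarrow> ip d (\<lambda>r. x r i) (\<lambda>r. m r j) = G i j"
proof -
  assume ij: "i < K" "j < K"
  have "ip d (\<lambda>r. x r i) (\<lambda>r. m r j) = (\<Sum>l<K. (lam l * c l j) * ip d (\<lambda>r. x r i) (\<lambda>r. q r l))"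
    unfolding m_def ip_sum_right ip_scale_right ..
  also have "\<dots> = G i j" unfolding G_def c_def by (intro sum.cong refl) (simp add: ip_sym mult_ac)
  finally show ?thesis .
qed

lemma ip_x_Y: "i < K \<Longrightarrow> j < K \<Longrightarrow>
   ip d (\<lambda>r. x r i) (\<lambda>r. Y r j) = P i j - \<alpha> * (if i = j then 1 else 0) - a j * G i j"
proof -
  assume ij: "i < K" "j < K"
  have A: "ip d (\<lambda>r. x r i) (\<lambda>r. \<Sum>k<K. x r k * P k j) = P i j"
  proof -
    have "ip d (\<lambda>r. x r i) (\<lambda>r. \<Sum>k<K. x r k * P k j) = (\<Sum>k<K. ip d (\<lambda>r. x r i) (\<lambda>r. x r k) * P k j)"
      unfolding ip_sum_right by (simp add: ip_scale_right2)
    also have "\<dots> = (\<Sum>k<K. P k j * (if k = i then 1 else 0))"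
      using ij by (intro sum.cong refl) (auto simp: ox)
    also have "\<dots> = P i j" by (rule sum_delta_col[OF ij(1)])
    finally show ?thesis .
  qed
  show ?thesis unfolding Y_def ip_diff_right ip_add_right ip_scale_right A ip_x_m[OF ij] ox[OF ij] by simp
qed

lemma proj_Y: "j < K \<Longrightarrow> Y r j - (\<Sum>k<K. x r k * ip d (\<lambda>r. x r k) (\<lambda>r. Y r j)) = - a j * z r j"
proof -
  assume j: "j < K"
  have "(\<Sum>k<K. x r k * ip d (\<lambda>r. x r k) (\<lambda>r. Y r j))
     = (\<Sum>k<K. x r k * P k j) - \<alpha> * (\<Sum>k<K. x r k * (if k = j then 1 else 0)) - a j * (\<Sum>k<K. x r k * G k j)"
    using j by (simp add: ip_x_Y algebra_simps sum_subtractf sum_distrib_left)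
  also have "(\<Sum>k<K. x r k * (if k = j then 1 else 0)) = x r j" by (rule sum_delta_col[OF j])
  finally show ?thesis unfolding Y_def z_def by (simp add: algebra_simps)
qed

lemma ip_q_m: "i < K \<Longrightarrow> j < K \<Longrightarrow> ip d (\<lambda>r. q r i) (\<lambda>r. m r j) = lam i * c i j"
proof -
  assume ij: "i < K" "j < K"
  have "ip d (\<lambda>r. q r i) (\<lambda>r. m r j) = (\<Sum>l<K. ip d (\<lambda>r. q r i) (\<lambda>r. q r l) * (lam l * c l j))"
    unfolding m_def ip_sum_right ip_scale_right by (simp add: mult.commute)
  also have "\<dots> = (\<Sum>l<K. (lam l * c l j) * (if l = i then 1 else 0))"
    using ij by (intro sum.cong refl) (auto simp: oq)
  also have "\<dots> = lam i * c i j" by (rule sum_delta_col[OF ij(1)])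
  finally show ?thesis .
qed

lemma ip_q_z: "i < K \<Longrightarrow> j < K \<Longrightarrow> ip d (\<lambda>r. q r i) (\<lambda>r. z r j) = lam i * c i j - (\<Sum>k<K. c i k * G k j)"
proof -
  assume ij: "i < K" "j < K"
  show ?thesis unfolding z_def ip_diff_right ip_q_m[OF ij] ip_sum_right ip_scale_right2 c_def by simp
qed

lemma proj_z: "j < K \<Longrightarrow> z r j - (\<Sum>i<K. q r i * ip d (\<lambda>r. q r i) (\<lambda>r. z r j)) = - (\<Sum>k<K. W r k * G k j)"
proof -
  assume j: "j < K"
  have "(\<Sum>i<K. q r i * ip d (\<lambda>r. q r i) (\<lambda>r. z r j))
      = (\<Sum>i<K. q r i * (lam i * c i j - (\<Sum>k<K. c i k * G k j)))"
    by (intro sum.cong refl) (simp add: ip_q_z j)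
  also have "\<dots> = (\<Sum>i<K. q r i * (lam i * c i j)) - (\<Sum>i<K. \<Sum>k<K. q r i * c i k * G k j)"
    by (simp add: right_diff_distrib sum_subtractf sum_distrib_left mult.assoc)
  also have "(\<Sum>i<K. q r i * (lam i * c i j)) = m r j" unfolding m_def by (simp add: mult_ac)
  also have "(\<Sum>i<K. \<Sum>k<K. q r i * c i k * G k j) = (\<Sum>k<K. (\<Sum>i<K. q r i * c i k) * G k j)"
    by (subst sum.swap) (simp add: sum_distrib_right)
  finally have eq: "(\<Sum>i<K. q r i * ip d (\<lambda>r. q r i) (\<lambda>r. z r j)) = m r j - (\<Sum>k<K. (\<Sum>i<K. q r i * c i k) * G k j)" .
  have "z r j - (\<Sum>i<K. q r i * ip d (\<lambda>r. q r i) (\<lambda>r. z r j))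
      = z r j - m r j + (\<Sum>k<K. (\<Sum>i<K. q r i * c i k) * G k j)" using eq by simp
  also have "\<dots> = - (\<Sum>k<K. W r k * G k j)"
    unfolding z_def W_def by (simp add: left_diff_distrib sum_subtractf)
  finally show ?thesis .
qed

lemma W_eq: "j < K \<Longrightarrow> W r j = E r j - (\<Sum>i<K. q r i * S i j)"
proof -
  assume j: "j < K"
  have "(\<Sum>i<K. q r i * c i j) = (\<Sum>i<K. q r i * S i j + q r i * (if i = j then 1 else 0))"
    by (intro sum.cong refl) (simp add: c_S j algebra_simps)
  also have "\<dots> = (\<Sum>i<K. q r i * S i j) + (\<Sum>i<K. q r i * (if i = j then 1 else 0))"
    by (rule sum.distrib)
  also have "(\<Sum>i<K. q r i * (if i = j then 1 else 0)) = q r j" by (rule sum_delta_col[OF j])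
  finally show ?thesis unfolding W_def E_def by simp
qed

lemma G_expand: "k < K \<Longrightarrow> j < K \<Longrightarrow>
   G k j = lam k * S k j + lam j * S j k + lam j * (if k = j then 1 else 0) + (\<Sum>l<K. lam l * S l k * S l j)"
proof -
  assume kj: "k < K" "j < K"
  have "G k j = (\<Sum>l<K. lam l * S l k * S l j) + (\<Sum>l<K. (lam l * S l j) * (if l = k then 1 else 0))
     + (\<Sum>l<K. (lam l * S l k) * (if l = j then 1 else 0)) + (\<Sum>l<K. (lam l * (if l = k then 1 else 0)) * (if l = j then 1 else 0))"
  proof -
    have "G k j = (\<Sum>l<K. lam l * (S l k + (if l = k then 1 else 0)) * (S l j + (if l = j then 1 else 0)))"
      unfolding G_def by (intro sum.cong refl) (simp add: c_S kj)
    also have "\<dots> = (\<Sum>l<K. lam l * S l k * S l j + (lam l * S l j) * (if l = k then 1 else 0)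
       + (lam l * S l k) * (if l = j then 1 else 0) + (lam l * (if l = k then 1 else 0)) * (if l = j then 1 else 0))"
      by (intro sum.cong refl) (simp add: algebra_simps)
    finally show ?thesis by (simp add: sum.distrib)
  qed
  also have "(\<Sum>l<K. (lam l * S l j) * (if l = k then 1 else 0)) = lam k * S k j" by (rule sum_delta_col[OF kj(1)])
  also have "(\<Sum>l<K. (lam l * S l k) * (if l = j then 1 else 0)) = lam j * S j k" by (rule sum_delta_col[OF kj(2)])
  also have "(\<Sum>l<K. (lam l * (if l = k then 1 else 0)) * (if l = j then 1 else 0)) = lam j * (if j = k then 1 else 0)"
    by (rule sum_delta_col[OF kj(2)])
  finally show ?thesis by auto
qed

lemma orthE: "i < K \<Longrightarrow> j < K \<Longrightarrow> S i j + S j i + ip d (\<lambda>r. E r i) (\<lambda>r. E r j) = 0"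
proof -
  assume ij: "i < K" "j < K"
  have "ip d (\<lambda>r. x r i) (\<lambda>r. x r j) = ip d (\<lambda>r. q r i + E r i) (\<lambda>r. q r j + E r j)"
    unfolding E_def by simp
  also have "\<dots> = ip d (\<lambda>r. q r i) (\<lambda>r. q r j) + S i j + S j i + ip d (\<lambda>r. E r i) (\<lambda>r. E r j)"
    unfolding S_def ip_def by (simp add: algebra_simps sum.distrib mult.commute)
  finally show ?thesis using ox[OF ij] oq[OF ij] by simp
qed

end

lemma nrm_scale: "nrm d (\<lambda>r. t * f r) = \<bar>t\<bar> * nrm d f"
proof -
  have "nrm d (\<lambda>r. t * f r) = sqrt (t\<^sup>2 * (\<Sum>r<d. (f r)\<^sup>2))"
    unfolding L2_set_def by (simp add: power_mult_distrib sum_distrib_left)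
  also have "\<dots> = \<bar>t\<bar> * nrm d f" unfolding L2_set_def by (simp add: real_sqrt_mult)
  finally show ?thesis .
qed

lemma nrm_neg: "nrm d (\<lambda>r. - f r) = nrm d f"
  using nrm_scale[where t="-1" and f=f and d=d] by simp

lemma nrm_diff: "nrm d (\<lambda>r. f r - g r) \<le> nrm d f + nrm d g"
  using L2_set_triangle_ineq[of f "\<lambda>r. - g r" "{..<d}"] nrm_neg[where d=d and f=g] by simp

lemma nrm_sum: "nrm d (\<lambda>r. \<Sum>k<(n::nat). f k r) \<le> (\<Sum>k<n. nrm d (f k))"
proof (induction n)
  case 0 then show ?case by (simp add: L2_set_def)
next
  case (Suc n)
  have "nrm d (\<lambda>r. \<Sum>k<Suc n. f k r) = nrm d (\<lambda>r. (\<Sum>k<n. f k r) + f n r)" by simp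
  also have "\<dots> \<le> nrm d (\<lambda>r. \<Sum>k<n. f k r) + nrm d (f n)" by (rule L2_set_triangle_ineq)
  also have "\<dots> \<le> (\<Sum>k<n. nrm d (f k)) + nrm d (f n)" using Suc by simp
  finally show ?case by simp
qed

lemma nrm_le_of_sq: "0 \<le> b \<Longrightarrow> (\<Sum>r<d. (f r)\<^sup>2) \<le> b\<^sup>2 \<Longrightarrow> nrm d f \<le> b"
proof -
  assume b: "0 \<le> b" and le: "(\<Sum>r<d. (f r)\<^sup>2) \<le> b\<^sup>2"
  have "nrm d f \<le> sqrt (b\<^sup>2)" unfolding L2_set_def by (rule real_sqrt_le_mono[OF le])
  also have "\<dots> = b" using b by simp
  finally show ?thesis .
qed

locale core2 = core +
  assumes K1: "1 \<le> K"
    and lam_ord: "\<And>i j. i < j \<Longrightarrow> j < K \<Longrightarrow> lam j < lam i" and lamK: "0 < lam (K - 1)"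
    and a_ord: "\<And>i j. i < j \<Longrightarrow> j < K \<Longrightarrow> a j < a i" and aK: "0 < a (K - 1)"
begin

lemma lam_bounds: "l < K \<Longrightarrow> lam (K-1) \<le> lam l \<and> lam l \<le> lam 0"
proof -
  assume l: "l < K"
  have "lam (K-1) \<le> lam l"
  proof (cases "l = K - 1")
    case False
    hence "l < K - 1" using l by simp
    thus ?thesis using lam_ord[of l "K-1"] l by simp
  qed simp
  moreover have "lam l \<le> lam 0"
  proof (cases "l = 0")
    case False thus ?thesis using lam_ord[of 0 l] l by simp
  qed simp
  ultimately show ?thesis by simp
qed

lemma a_bounds: "l < K \<Longrightarrow> a (K-1) \<le> a l \<and> a l \<le> a 0"
proof -
  assume l: "l < K"
  have "a (K-1) \<le> a l"
  proof (cases "l = K - 1")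
    case False
    hence "l < K - 1" using l by simp
    thus ?thesis using a_ord[of l "K-1"] l by simp
  qed simp
  moreover have "a l \<le> a 0"
  proof (cases "l = 0")
    case False thus ?thesis using a_ord[of 0 l] l by simp
  qed simp
  ultimately show ?thesis by simp
qed

lemma lam_pos: "l < K \<Longrightarrow> 0 < lam l" using lam_bounds lamK by force
lemma a_pos: "l < K \<Longrightarrow> 0 < a l" using a_bounds aK by force

lemma lam_ne: "i < K \<Longrightarrow> j < K \<Longrightarrow> i \<noteq> j \<Longrightarrow> lam i \<noteq> lam j"
  using lam_ord[of i j] lam_ord[of j i] by (cases "i < j") auto
lemma a_ne: "i < K \<Longrightarrow> j < K \<Longrightarrow> i \<noteq> j \<Longrightarrow> a i \<noteq> a j"
  using a_ord[of i j] a_ord[of j i] by (cases "i < j") auto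

definition "eps = sqrt (\<Sum>r<d. \<Sum>j<K. (E r j)\<^sup>2)"

lemma nrm_x: "i < K \<Longrightarrow> nrm d (\<lambda>r. x r i) = 1"
  using ox[of i i] unfolding L2_set_def ip_def by (simp add: power2_eq_square)

lemma nrm_q: "i < K \<Longrightarrow> nrm d (\<lambda>r. q r i) = 1"
  using oq[of i i] unfolding L2_set_def ip_def by (simp add: power2_eq_square)

lemma col_le:
  fixes F :: "nat \<Rightarrow> nat \<Rightarrow> real"
  assumes j: "j < K"
  shows "(\<Sum>r<d. (F r j)\<^sup>2) \<le> (\<Sum>r<d. \<Sum>j<K. (F r j)\<^sup>2)"
  by (intro sum_mono member_le_sum) (use j in auto)

lemma E_col: "j < K \<Longrightarrow> nrm d (\<lambda>r. E r j) \<le> eps"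
  unfolding eps_def L2_set_def by (intro real_sqrt_le_mono col_le)

lemma Y_col: "0 \<le> \<rho> \<Longrightarrow> (\<Sum>r<d. \<Sum>j<K. (Y r j)\<^sup>2) \<le> \<rho>\<^sup>2 \<Longrightarrow> j < K \<Longrightarrow> nrm d (\<lambda>r. Y r j) \<le> \<rho>"
  by (rule nrm_le_of_sq) (use col_le[of j Y] in auto)

lemma eps_nonneg: "0 \<le> eps" unfolding eps_def by (simp add: sum_nonneg)

end

context core2
begin

lemma G_off:
  assumes rho: "0 \<le> \<rho>" "(\<Sum>r<d. \<Sum>j<K. (Y r j)\<^sup>2) \<le> \<rho>\<^sup>2" and ij: "i < K" "j < K"
  shows "\<bar>a j - a i\<bar> * \<bar>G i j\<bar> \<le> 2 * \<rho>"
proof -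
  have t1: "\<bar>P i j - \<alpha> * (if i = j then 1 else 0) - a j * G i j\<bar> \<le> \<rho>"
  proof -
    have "\<bar>ip d (\<lambda>r. x r i) (\<lambda>r. Y r j)\<bar> \<le> nrm d (\<lambda>r. x r i) * nrm d (\<lambda>r. Y r j)" by (rule ip_cs)
    also have "\<dots> \<le> \<rho>" using nrm_x[OF ij(1)] Y_col[OF rho ij(2)] by simp
    finally show ?thesis using ip_x_Y[OF ij] by simp
  qed
  have t2: "\<bar>P j i - \<alpha> * (if j = i then 1 else 0) - a i * G j i\<bar> \<le> \<rho>"
  proof -
    have "\<bar>ip d (\<lambda>r. x r j) (\<lambda>r. Y r i)\<bar> \<le> nrm d (\<lambda>r. x r j) * nrm d (\<lambda>r. Y r i)" by (rule ip_cs)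
    also have "\<dots> \<le> \<rho>" using nrm_x[OF ij(2)] Y_col[OF rho ij(1)] by simp
    finally show ?thesis using ip_x_Y[OF ij(2) ij(1)] by simp
  qed
  have "(a j - a i) * G i j = (P j i - \<alpha> * (if j = i then 1 else 0) - a i * G j i) - (P i j - \<alpha> * (if i = j then 1 else 0) - a j * G i j)"
    using Psym[OF ij] G_sym[of j i] by (simp add: algebra_simps)
  hence "\<bar>(a j - a i) * G i j\<bar> \<le> 2 * \<rho>" using t1 t2 by (simp add: abs_le_iff)
  thus ?thesis by (simp add: abs_mult)
qed

lemma z_bound:
  assumes rho: "0 \<le> \<rho>" "(\<Sum>r<d. \<Sum>j<K. (Y r j)\<^sup>2) \<le> \<rho>\<^sup>2" and j: "j < K"
  shows "a j * nrm d (\<lambda>r. z r j) \<le> \<rho>"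
proof -
  have "(\<Sum>r<d. (Y r j - (\<Sum>k<K. x r k * ip d (\<lambda>r. x r k) (\<lambda>r. Y r j)))\<^sup>2)
     = (\<Sum>r<d. (Y r j)\<^sup>2) - (\<Sum>k<K. (ip d (\<lambda>r. x r k) (\<lambda>r. Y r j))\<^sup>2)"
    by (rule proj_pyth[OF ox])
  also have "\<dots> \<le> (\<Sum>r<d. (Y r j)\<^sup>2)" by (simp add: sum_nonneg)
  finally have "(\<Sum>r<d. (- a j * z r j)\<^sup>2) \<le> (\<Sum>r<d. (Y r j)\<^sup>2)" by (simp add: proj_Y[OF j])
  hence "nrm d (\<lambda>r. - a j * z r j) \<le> nrm d (\<lambda>r. Y r j)" by (rule nrm_mono_sq)
  also have "\<dots> \<le> \<rho>" by (rule Y_col[OF rho j])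
  finally show ?thesis using nrm_scale[where t="- a j" and d=d and f="\<lambda>r. z r j"] a_pos[OF j] by simp
qed

lemma WG_bound:
  assumes rho: "0 \<le> \<rho>" "(\<Sum>r<d. \<Sum>j<K. (Y r j)\<^sup>2) \<le> \<rho>\<^sup>2" and j: "j < K"
  shows "a j * nrm d (\<lambda>r. \<Sum>k<K. W r k * G k j) \<le> \<rho>"
proof -
  have "(\<Sum>r<d. (z r j - (\<Sum>i<K. q r i * ip d (\<lambda>r. q r i) (\<lambda>r. z r j)))\<^sup>2)
     = (\<Sum>r<d. (z r j)\<^sup>2) - (\<Sum>k<K. (ip d (\<lambda>r. q r k) (\<lambda>r. z r j))\<^sup>2)"
    by (rule proj_pyth[OF oq])
  also have "\<dots> \<le> (\<Sum>r<d. (z r j)\<^sup>2)" by (simp add: sum_nonneg)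
  finally have "(\<Sum>r<d. (- (\<Sum>k<K. W r k * G k j))\<^sup>2) \<le> (\<Sum>r<d. (z r j)\<^sup>2)" by (simp add: proj_z[OF j])
  hence "nrm d (\<lambda>r. - (\<Sum>k<K. W r k * G k j)) \<le> nrm d (\<lambda>r. z r j)" by (rule nrm_mono_sq)
  hence "nrm d (\<lambda>r. \<Sum>k<K. W r k * G k j) \<le> nrm d (\<lambda>r. z r j)"
    using nrm_neg[where d=d and f="\<lambda>r. \<Sum>k<K. W r k * G k j"] by simp
  hence "a j * nrm d (\<lambda>r. \<Sum>k<K. W r k * G k j) \<le> a j * nrm d (\<lambda>r. z r j)"
    using a_pos[OF j] by (simp add: mult_left_mono)
  also have "\<dots> \<le> \<rho>" by (rule z_bound[OF rho j])
  finally show ?thesis .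
qed

lemma S_bound: "i < K \<Longrightarrow> j < K \<Longrightarrow> \<bar>S i j\<bar> \<le> nrm d (\<lambda>r. E r j)"
  using ip_cs[of d "\<lambda>r. q r i" "\<lambda>r. E r j"] nrm_q unfolding S_def by simp

lemma E_pyth: "j < K \<Longrightarrow> (nrm d (\<lambda>r. E r j))\<^sup>2 = (\<Sum>i<K. (S i j)\<^sup>2) + (nrm d (\<lambda>r. W r j))\<^sup>2"
proof -
  assume j: "j < K"
  have "(\<Sum>r<d. (E r j - (\<Sum>i<K. q r i * ip d (\<lambda>r. q r i) (\<lambda>r. E r j)))\<^sup>2)
     = (\<Sum>r<d. (E r j)\<^sup>2) - (\<Sum>k<K. (ip d (\<lambda>r. q r k) (\<lambda>r. E r j))\<^sup>2)"
    by (rule proj_pyth[OF oq])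
  hence "(\<Sum>r<d. (W r j)\<^sup>2) = (\<Sum>r<d. (E r j)\<^sup>2) - (\<Sum>k<K. (S k j)\<^sup>2)"
    by (simp add: W_eq[OF j] S_def)
  thus ?thesis by (simp add: nrm_sq)
qed

lemma W_le_E: "j < K \<Longrightarrow> nrm d (\<lambda>r. W r j) \<le> nrm d (\<lambda>r. E r j)"
proof -
  assume j: "j < K"
  have "(nrm d (\<lambda>r. W r j))\<^sup>2 \<le> (nrm d (\<lambda>r. E r j))\<^sup>2" using E_pyth[OF j] by (simp add: sum_nonneg)
  thus ?thesis by (simp add: power2_le_iff_abs_le)
qed

lemma E_split: "j < K \<Longrightarrow> nrm d (\<lambda>r. E r j) \<le> (\<Sum>i<K. \<bar>S i j\<bar>) + nrm d (\<lambda>r. W r j)"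
proof -
  assume j: "j < K"
  have "nrm d (\<lambda>r. E r j) = sqrt ((nrm d (\<lambda>r. E r j))\<^sup>2)" by simp
  also have "\<dots> = sqrt ((L2_set (\<lambda>i. S i j) {..<K})\<^sup>2 + (nrm d (\<lambda>r. W r j))\<^sup>2)"
    using E_pyth[OF j] nrm_sq[where d=K and u="\<lambda>i. S i j"] by simp
  also have "\<dots> \<le> sqrt ((L2_set (\<lambda>i. S i j) {..<K})\<^sup>2) + sqrt ((nrm d (\<lambda>r. W r j))\<^sup>2)"
    by (rule sqrt_add_le_add_sqrt) simp_all
  also have "\<dots> = L2_set (\<lambda>i. S i j) {..<K} + nrm d (\<lambda>r. W r j)" by simp
  also have "\<dots> \<le> (\<Sum>i<K. \<bar>S i j\<bar>) + nrm d (\<lambda>r. W r j)" using L2_set_le_sum_abs by simp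
  finally show ?thesis .
qed

lemma ipE_bound: "i < K \<Longrightarrow> j < K \<Longrightarrow> \<bar>ip d (\<lambda>r. E r i) (\<lambda>r. E r j)\<bar> \<le> eps\<^sup>2"
proof -
  assume ij: "i < K" "j < K"
  have "\<bar>ip d (\<lambda>r. E r i) (\<lambda>r. E r j)\<bar> \<le> nrm d (\<lambda>r. E r i) * nrm d (\<lambda>r. E r j)" by (rule ip_cs)
  also have "\<dots> \<le> eps * eps" using E_col[OF ij(1)] E_col[OF ij(2)] eps_nonneg by (intro mult_mono) auto
  finally show ?thesis by (simp add: power2_eq_square)
qed

lemma S_eps: "i < K \<Longrightarrow> j < K \<Longrightarrow> \<bar>S i j\<bar> \<le> eps"
  using S_bound E_col by (meson order_trans)

lemma SS_bound: "k < K \<Longrightarrow> j < K \<Longrightarrow> \<bar>\<Sum>l<K. lam l * S l k * S l j\<bar> \<le> K * lam 0 * eps\<^sup>2"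
proof -
  assume kj: "k < K" "j < K"
  have "\<bar>\<Sum>l<K. lam l * S l k * S l j\<bar> \<le> (\<Sum>l<K. \<bar>lam l * S l k * S l j\<bar>)" by (rule sum_abs)
  also have "\<dots> \<le> (\<Sum>l<K. lam 0 * eps\<^sup>2)"
  proof (rule sum_mono)
    fix l assume "l \<in> {..<K}" hence l: "l < K" by simp
    have "\<bar>lam l * S l k * S l j\<bar> = \<bar>lam l\<bar> * (\<bar>S l k\<bar> * \<bar>S l j\<bar>)" by (simp add: abs_mult)
    also have "\<dots> \<le> lam 0 * (eps * eps)"
      using lam_bounds[OF l] lam_pos[OF l] S_eps[OF l kj(1)] S_eps[OF l kj(2)]
      by (intro mult_mono) (auto intro: mult_mono)
    finally show "\<bar>lam l * S l k * S l j\<bar> \<le> lam 0 * eps\<^sup>2" by (simp add: power2_eq_square)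
  qed
  finally show ?thesis by simp
qed

lemma G_dev:
  assumes kj: "k < K" "j < K" and e1: "eps \<le> 1"
  shows "\<bar>G k j - lam j * (if k = j then 1 else 0)\<bar> \<le> lam 0 * (2 + K) * eps"
proof -
  have "G k j - lam j * (if k = j then 1 else 0) = lam k * S k j + lam j * S j k + (\<Sum>l<K. lam l * S l k * S l j)"
    using G_expand[OF kj] by simp
  hence "\<bar>G k j - lam j * (if k = j then 1 else 0)\<bar> \<le> \<bar>lam k * S k j\<bar> + \<bar>lam j * S j k\<bar> + \<bar>\<Sum>l<K. lam l * S l k * S l j\<bar>"
    by linarith
  also have "\<dots> \<le> lam 0 * eps + lam 0 * eps + K * lam 0 * eps\<^sup>2"
  proof -
    have "\<bar>lam k * S k j\<bar> \<le> lam 0 * eps" unfolding abs_mult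
      using lam_bounds[OF kj(1)] lam_pos[OF kj(1)] S_eps[OF kj] by (intro mult_mono) auto
    moreover have "\<bar>lam j * S j k\<bar> \<le> lam 0 * eps" unfolding abs_mult
      using lam_bounds[OF kj(2)] lam_pos[OF kj(2)] S_eps[OF kj(2) kj(1)] by (intro mult_mono) auto
    ultimately show ?thesis using SS_bound[OF kj] by linarith
  qed
  also have "\<dots> \<le> lam 0 * (2 + K) * eps"
  proof -
    have "eps\<^sup>2 \<le> eps" using e1 eps_nonneg by (simp add: power2_eq_square mult_left_le)
    hence "K * lam 0 * eps\<^sup>2 \<le> K * lam 0 * eps" using lam_pos[of 0] K1
      by (intro mult_left_mono) auto
    thus ?thesis by (simp add: algebra_simps)
  qed
  finally show ?thesis .
qed

end

definition "cC1 K lam a = (\<Sum>j<K. \<Sum>i<K. if i = j then 0 else 2 / (\<bar>a j - a i\<bar> * \<bar>lam i - lam j\<bar>))"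
definition "cC2 K lam = (\<Sum>j<K. \<Sum>i<K. if i = j then 1/2 else (real K + 1) * lam 0 / \<bar>lam i - lam j\<bar>)"
definition "cC3 K lam a = 2 * real K / (a (K-1) * lam (K-1))"
definition "dlt0 K lam = min 1 (min (lam (K-1) / (2 * real K * lam 0 * (2 + real K))) (1 / (2 * cC2 K lam + 1)))"
definition "eta K lam a = 2 * (cC1 K lam a + cC3 K lam a) + 1"

context core2
begin

lemma W_each:
  assumes rho: "0 \<le> \<rho>" "(\<Sum>r<d. \<Sum>j<K. (Y r j)\<^sup>2) \<le> \<rho>\<^sup>2" and j: "j < K" and e1: "eps \<le> 1"
  shows "lam (K-1) * nrm d (\<lambda>r. W r j) \<le> \<rho> / a (K-1) + lam 0 * (2 + K) * eps * (\<Sum>k<K. nrm d (\<lambda>r. W r k))"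
proof -
  define dev where "dev k = G k j - lam j * (if k = j then 1 else 0)" for k
  have id: "lam j * W r j = (\<Sum>k<K. W r k * G k j) - (\<Sum>k<K. W r k * dev k)" for r
  proof -
    have "(\<Sum>k<K. W r k * dev k) = (\<Sum>k<K. W r k * G k j) - (\<Sum>k<K. (W r k * lam j) * (if k = j then 1 else 0))"
      unfolding dev_def by (simp add: algebra_simps sum_subtractf)
    also have "(\<Sum>k<K. (W r k * lam j) * (if k = j then 1 else 0)) = W r j * lam j" by (rule sum_delta_col[OF j])
    finally show ?thesis by simp
  qed
  have "lam (K-1) * nrm d (\<lambda>r. W r j) \<le> lam j * nrm d (\<lambda>r. W r j)"
    using lam_bounds[OF j] by (intro mult_right_mono) auto
  also have "\<dots> = nrm d (\<lambda>r. lam j * W r j)" using nrm_scale[where t="lam j" and d=d and f="\<lambda>r. W r j"] lam_pos[OF j] by simp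
  also have "\<dots> = nrm d (\<lambda>r. (\<Sum>k<K. W r k * G k j) - (\<Sum>k<K. W r k * dev k))" by (simp only: id)
  also have "\<dots> \<le> nrm d (\<lambda>r. \<Sum>k<K. W r k * G k j) + nrm d (\<lambda>r. \<Sum>k<K. W r k * dev k)" by (rule nrm_diff)
  also have "\<dots> \<le> \<rho> / a (K-1) + lam 0 * (2 + K) * eps * (\<Sum>k<K. nrm d (\<lambda>r. W r k))"
  proof (rule add_mono)
    have aj: "0 < a j" "a (K-1) \<le> a j" using a_pos[OF j] a_bounds[OF j] by auto
    have "nrm d (\<lambda>r. \<Sum>k<K. W r k * G k j) \<le> \<rho> / a j"
      using WG_bound[OF rho j] aj by (simp add: field_simps)
    also have "\<dots> \<le> \<rho> / a (K-1)" using aj aK rho(1) by (intro divide_left_mono) auto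
    finally show "nrm d (\<lambda>r. \<Sum>k<K. W r k * G k j) \<le> \<rho> / a (K-1)" .
  next
    have "nrm d (\<lambda>r. \<Sum>k<K. W r k * dev k) \<le> (\<Sum>k<K. nrm d (\<lambda>r. W r k * dev k))" by (rule nrm_sum)
    also have "\<dots> = (\<Sum>k<K. \<bar>dev k\<bar> * nrm d (\<lambda>r. W r k))"
      by (intro sum.cong refl) (subst mult.commute, rule nrm_scale)
    also have "\<dots> \<le> (\<Sum>k<K. lam 0 * (2 + K) * eps * nrm d (\<lambda>r. W r k))"
    proof (rule sum_mono)
      fix k assume k: "k \<in> {..<K}"
      have "\<bar>dev k\<bar> \<le> lam 0 * (2 + K) * eps" unfolding dev_def using G_dev[OF _ j e1] k by blast
      thus "\<bar>dev k\<bar> * nrm d (\<lambda>r. W r k) \<le> lam 0 * (2 + K) * eps * nrm d (\<lambda>r. W r k)"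
        by (rule mult_right_mono) simp
    qed
    also have "\<dots> = lam 0 * (2 + K) * eps * (\<Sum>k<K. nrm d (\<lambda>r. W r k))" by (simp add: sum_distrib_left)
    finally show "nrm d (\<lambda>r. \<Sum>k<K. W r k * dev k) \<le> lam 0 * (2 + K) * eps * (\<Sum>k<K. nrm d (\<lambda>r. W r k))" .
  qed
  finally show ?thesis .
qed

lemma W_sum:
  assumes rho: "0 \<le> \<rho>" "(\<Sum>r<d. \<Sum>j<K. (Y r j)\<^sup>2) \<le> \<rho>\<^sup>2" and e1: "eps \<le> 1"
    and small: "K * (lam 0 * (2 + K) * eps) \<le> lam (K-1) / 2"
  shows "(\<Sum>j<K. nrm d (\<lambda>r. W r j)) \<le> cC3 K lam a * \<rho>"
proof -
  define \<omega> where "\<omega> = (\<Sum>j<K. nrm d (\<lambda>r. W r j))"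
  define \<gamma> where "\<gamma> = lam 0 * (2 + K) * eps"
  have "lam (K-1) * \<omega> = (\<Sum>j<K. lam (K-1) * nrm d (\<lambda>r. W r j))" by (simp add: \<omega>_def sum_distrib_left)
  also have "\<dots> \<le> (\<Sum>j<K. \<rho> / a (K-1) + \<gamma> * \<omega>)"
    by (intro sum_mono) (use W_each[OF rho _ e1] in \<open>auto simp: \<omega>_def \<gamma>_def\<close>)
  also have "\<dots> = K * (\<rho> / a (K-1)) + K * \<gamma> * \<omega>" by (simp add: algebra_simps)
  finally have h1: "lam (K-1) * \<omega> \<le> K * (\<rho> / a (K-1)) + K * \<gamma> * \<omega>" .
  have h2: "K * \<gamma> * \<omega> \<le> lam (K-1) / 2 * \<omega>"
    using small by (intro mult_right_mono) (auto simp: \<gamma>_def \<omega>_def intro: sum_nonneg)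
  from h1 h2 have "lam (K-1) * \<omega> \<le> 2 * (K * (\<rho> / a (K-1)))" by linarith
  hence "\<omega> \<le> 2 * K * \<rho> / (a (K-1) * lam (K-1))" using lamK aK by (simp add: field_simps)
  thus ?thesis by (simp add: \<omega>_def cC3_def)
qed

lemma S_off:
  assumes rho: "0 \<le> \<rho>" "(\<Sum>r<d. \<Sum>j<K. (Y r j)\<^sup>2) \<le> \<rho>\<^sup>2" and ij: "i < K" "j < K" "i \<noteq> j"
  shows "\<bar>S i j\<bar> \<le> \<rho> * (2 / (\<bar>a j - a i\<bar> * \<bar>lam i - lam j\<bar>)) + eps\<^sup>2 * ((real K + 1) * lam 0 / \<bar>lam i - lam j\<bar>)"
proof -
  have ha: "\<bar>a j - a i\<bar> > 0" using a_ne[OF ij] by simp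
  have hl: "\<bar>lam i - lam j\<bar> > 0" using lam_ne[OF ij] by simp
  have "G i j = lam i * S i j + lam j * S j i + (\<Sum>l<K. lam l * S l i * S l j)"
    using G_expand[OF ij(1,2)] ij(3) by simp
  moreover have "S j i = - S i j - ip d (\<lambda>r. E r i) (\<lambda>r. E r j)" using orthE[OF ij(1,2)] by simp
  ultimately have "(lam i - lam j) * S i j = G i j + lam j * ip d (\<lambda>r. E r i) (\<lambda>r. E r j) - (\<Sum>l<K. lam l * S l i * S l j)"
    by (simp add: algebra_simps)
  hence "\<bar>lam i - lam j\<bar> * \<bar>S i j\<bar> \<le> \<bar>G i j\<bar> + \<bar>lam j * ip d (\<lambda>r. E r i) (\<lambda>r. E r j)\<bar> + \<bar>\<Sum>l<K. lam l * S l i * S l j\<bar>"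
    by (simp add: abs_mult[symmetric])
  also have "\<dots> \<le> 2 * \<rho> / \<bar>a j - a i\<bar> + lam 0 * eps\<^sup>2 + K * lam 0 * eps\<^sup>2"
  proof -
    have "\<bar>G i j\<bar> \<le> 2 * \<rho> / \<bar>a j - a i\<bar>" using G_off[OF rho ij(1,2)] ha by (simp add: field_simps)
    moreover have "\<bar>lam j * ip d (\<lambda>r. E r i) (\<lambda>r. E r j)\<bar> \<le> lam 0 * eps\<^sup>2" unfolding abs_mult
      using lam_bounds[OF ij(2)] lam_pos[OF ij(2)] ipE_bound[OF ij(1,2)] by (intro mult_mono) auto
    ultimately show ?thesis using SS_bound[OF ij(1,2)] by linarith
  qed
  finally have "\<bar>lam i - lam j\<bar> * \<bar>S i j\<bar> \<le> 2 * \<rho> / \<bar>a j - a i\<bar> + (real K + 1) * lam 0 * eps\<^sup>2"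
    by (simp add: algebra_simps)
  hence "\<bar>S i j\<bar> \<le> (2 * \<rho> / \<bar>a j - a i\<bar> + (real K + 1) * lam 0 * eps\<^sup>2) / \<bar>lam i - lam j\<bar>"
    using hl by (simp add: field_simps)
  also have "\<dots> = \<rho> * (2 / (\<bar>a j - a i\<bar> * \<bar>lam i - lam j\<bar>)) + eps\<^sup>2 * ((real K + 1) * lam 0 / \<bar>lam i - lam j\<bar>)"
    using ha hl by (simp add: field_simps)
  finally show ?thesis .
qed

lemma S_diag: "i < K \<Longrightarrow> \<bar>S i i\<bar> \<le> eps\<^sup>2 * (1/2)"
proof -
  assume i: "i < K"
  have "2 * S i i = - ip d (\<lambda>r. E r i) (\<lambda>r. E r i)" using orthE[OF i i] by simp
  hence "2 * \<bar>S i i\<bar> \<le> eps\<^sup>2" using ipE_bound[OF i i] by (simp add: abs_minus_cancel)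
  thus ?thesis by simp
qed

lemma S_total:
  assumes rho: "0 \<le> \<rho>" "(\<Sum>r<d. \<Sum>j<K. (Y r j)\<^sup>2) \<le> \<rho>\<^sup>2"
  shows "(\<Sum>j<K. \<Sum>i<K. \<bar>S i j\<bar>) \<le> cC1 K lam a * \<rho> + cC2 K lam * eps\<^sup>2"
proof -
  have "(\<Sum>j<K. \<Sum>i<K. \<bar>S i j\<bar>) \<le> (\<Sum>j<K. \<Sum>i<K. \<rho> * (if i = j then 0 else 2 / (\<bar>a j - a i\<bar> * \<bar>lam i - lam j\<bar>))
      + eps\<^sup>2 * (if i = j then 1/2 else (real K + 1) * lam 0 / \<bar>lam i - lam j\<bar>))"
  proof (intro sum_mono)
    fix j i assume j: "j \<in> {..<K}" and i: "i \<in> {..<K}"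
    show "\<bar>S i j\<bar> \<le> \<rho> * (if i = j then 0 else 2 / (\<bar>a j - a i\<bar> * \<bar>lam i - lam j\<bar>))
      + eps\<^sup>2 * (if i = j then 1/2 else (real K + 1) * lam 0 / \<bar>lam i - lam j\<bar>)"
    proof (cases "i = j")
      case True thus ?thesis using S_diag[of i] i by simp
    next
      case False thus ?thesis using S_off[OF rho _ _ False] i j by simp
    qed
  qed
  also have "\<dots> = cC1 K lam a * \<rho> + cC2 K lam * eps\<^sup>2"
    unfolding cC1_def cC2_def by (simp add: sum.distrib sum_distrib_left sum_distrib_right mult.commute)
  finally show ?thesis .
qed

lemma eps_le_cols: "eps \<le> (\<Sum>j<K. nrm d (\<lambda>r. E r j))"
proof -
  have "eps = sqrt (\<Sum>j<K. \<Sum>r<d. (E r j)\<^sup>2)" unfolding eps_def by (subst sum.swap) simp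
  also have "\<dots> = L2_set (\<lambda>j. nrm d (\<lambda>r. E r j)) {..<K}"
    unfolding L2_set_def[of "\<lambda>j. nrm d (\<lambda>r. E r j)"] by (simp add: nrm_sq)
  also have "\<dots> \<le> (\<Sum>j<K. \<bar>nrm d (\<lambda>r. E r j)\<bar>)" by (rule L2_set_le_sum_abs)
  finally show ?thesis by simp
qed

lemma main_local:
  assumes rho: "0 \<le> \<rho>" "(\<Sum>r<d. \<Sum>j<K. (Y r j)\<^sup>2) \<le> \<rho>\<^sup>2" and small: "eps \<le> dlt0 K lam"
  shows "eps \<le> eta K lam a * \<rho>"
proof -
  have e1: "eps \<le> 1" using small by (simp add: dlt0_def)
  have lam0: "0 < lam 0" using lam_pos K1 by simp
  have Kpos: "0 < real K" using K1 by simp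
  have e2: "eps \<le> lam (K-1) / (2 * real K * lam 0 * (2 + real K))" using small by (simp add: dlt0_def)
  have sm: "K * (lam 0 * (2 + K) * eps) \<le> lam (K-1) / 2"
  proof -
    have pos: "0 < 2 * real K * lam 0 * (2 + real K)" using lam0 Kpos by simp
    have "eps * (2 * real K * lam 0 * (2 + real K)) \<le> lam (K-1)" using e2 pos by (simp add: field_simps)
    thus ?thesis by (simp add: field_simps)
  qed
  have C2nn: "0 \<le> cC2 K lam" unfolding cC2_def by (intro sum_nonneg) (auto intro!: divide_nonneg_nonneg mult_nonneg_nonneg less_imp_le[OF lam0])
  have e3: "eps \<le> 1 / (2 * cC2 K lam + 1)" using small by (simp add: dlt0_def)
  have half: "cC2 K lam * eps\<^sup>2 \<le> eps / 2"
  proof -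
    have "eps * (2 * cC2 K lam + 1) \<le> 1" using e3 C2nn by (simp add: field_simps)
    hence "cC2 K lam * eps \<le> 1/2" using eps_nonneg by (simp add: algebra_simps)
    hence "cC2 K lam * eps * eps \<le> 1/2 * eps" using eps_nonneg by (intro mult_right_mono) auto
    thus ?thesis by (simp add: power2_eq_square mult.assoc)
  qed
  have "eps \<le> (\<Sum>j<K. nrm d (\<lambda>r. E r j))" by (rule eps_le_cols)
  also have "\<dots> \<le> (\<Sum>j<K. (\<Sum>i<K. \<bar>S i j\<bar>) + nrm d (\<lambda>r. W r j))" by (intro sum_mono E_split) simp
  also have "\<dots> = (\<Sum>j<K. \<Sum>i<K. \<bar>S i j\<bar>) + (\<Sum>j<K. nrm d (\<lambda>r. W r j))" by (rule sum.distrib)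
  also have "\<dots> \<le> (cC1 K lam a * \<rho> + cC2 K lam * eps\<^sup>2) + cC3 K lam a * \<rho>"
    by (intro add_mono S_total[OF rho] W_sum[OF rho e1 sm])
  finally have "eps \<le> cC1 K lam a * \<rho> + eps / 2 + cC3 K lam a * \<rho>" using half by linarith
  hence "eps \<le> 2 * (cC1 K lam a + cC3 K lam a) * \<rho>" by (simp add: algebra_simps)
  also have "\<dots> \<le> eta K lam a * \<rho>" unfolding eta_def using rho(1) by (simp add: algebra_simps)
  finally show ?thesis .
qed

end

lemma dist_attained:
  fixes X Q :: "real mat"
  shows "\<exists>qs. length qs = dim_col Q \<and> set qs \<subseteq> {1, -1} \<and>
     dist_F X Q = frob_norm (X - Q * mat_diag (dim_col Q) (\<lambda>i. qs ! i))"
proof -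
  let ?S = "{q :: real list. length q = dim_col Q \<and> set q \<subseteq> {1, -1}}"
  let ?f = "\<lambda>q. frob_norm (X - Q * mat_diag (dim_col Q) (\<lambda>i. q ! i))"
  have fin: "finite ?S"
    using finite_lists_length_eq[of "{1, -1 :: real}" "dim_col Q"] by (simp add: conj_commute)
  have "replicate (dim_col Q) 1 \<in> ?S" by auto
  hence ne: "?f ` ?S \<noteq> {}" by blast
  have "Min (?f ` ?S) \<in> ?f ` ?S" using fin ne by (intro Min_in) auto
  then obtain qs where "qs \<in> ?S" "Min (?f ` ?S) = ?f qs" by auto
  thus ?thesis unfolding dist_F_def by auto
qed

lemma A_entry:
  fixes Q X :: "real mat"
  assumes Q: "Q \<in> carrier_mat d K" and X: "X \<in> carrier_mat d K"
    and lp: "\<And>l. l < K \<Longrightarrow> 0 < lam l" and r: "r < d" and j: "j < K"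
  shows "A_op Q (mat_diag K (\<lambda>i. sqrt (lam i))) a \<alpha> X $$ (r,j)
     = \<alpha> * X $$ (r,j) + a j * (\<Sum>s<d. (\<Sum>l<K. Q $$ (r,l) * lam l * Q $$ (s,l)) * X $$ (s,j))"
proof -
  have TT: "mat_diag K (\<lambda>i. sqrt (lam i)) * mat_diag K (\<lambda>i. sqrt (lam i)) = mat_diag K lam"
    unfolding mat_diag_diag by (rule eq_matI) (auto simp: mat_diag_def lp less_imp_le)
  define L where "L = mat_diag K lam"
  have L: "L \<in> carrier_mat K K" by (simp add: L_def)
  have QL: "Q * L \<in> carrier_mat d K" using Q L by simp
  have QT: "transpose_mat Q \<in> carrier_mat K d" using Q by simp
  have M: "Q * L * transpose_mat Q \<in> carrier_mat d d" using Q L by simp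
  have MX: "Q * L * transpose_mat Q * X \<in> carrier_mat d K" using M X by simp
  have QLe: "(Q * L) $$ (r,l) = Q $$ (r,l) * lam l" if "r < d" "l < K" for r l
    unfolding L_def using mat_diag_mult_right[OF Q, of lam] that by simp
  have Me: "(Q * L * transpose_mat Q) $$ (r,s) = (\<Sum>l<K. Q $$ (r,l) * lam l * Q $$ (s,l))" if "r < d" "s < d" for r s
  proof -
    have "(Q * L * transpose_mat Q) $$ (r,s) = (\<Sum>l<K. (Q * L) $$ (r,l) * transpose_mat Q $$ (l,s))"
      by (rule mult_entry[OF QL QT that])
    also have "\<dots> = (\<Sum>l<K. Q $$ (r,l) * lam l * Q $$ (s,l))"
      by (intro sum.cong refl) (use that Q in \<open>simp add: QLe\<close>)
    finally show ?thesis .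
  qed
  have "A_op Q (mat_diag K (\<lambda>i. sqrt (lam i))) a \<alpha> X = \<alpha> \<cdot>\<^sub>m X + Q * L * transpose_mat Q * X * mat_diag K a"
    unfolding A_op_def TT L_def using X by simp
  moreover have "(Q * L * transpose_mat Q * X * mat_diag K a) $$ (r,j) = (Q * L * transpose_mat Q * X) $$ (r,j) * a j"
    using mat_diag_mult_right[OF MX, of a] r j by simp
  moreover have "(Q * L * transpose_mat Q * X) $$ (r,j) = (\<Sum>s<d. (\<Sum>l<K. Q $$ (r,l) * lam l * Q $$ (s,l)) * X $$ (s,j))"
    using r j by (simp add: mult_entry[OF M X r j] Me)
  moreover have MXN: "Q * L * transpose_mat Q * X * mat_diag K a \<in> carrier_mat d K" using MX by simp
  moreover have "(\<alpha> \<cdot>\<^sub>m X + Q * L * transpose_mat Q * X * mat_diag K a) $$ (r,j)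
      = \<alpha> * X $$ (r,j) + (Q * L * transpose_mat Q * X * mat_diag K a) $$ (r,j)"
    using carrier_matD[OF MXN] carrier_matD[OF X] r j by simp
  ultimately show ?thesis by (simp only:) (simp add: mult.commute)
qed

lemma gram_entry:
  assumes A: "A \<in> carrier_mat d K" and i: "i < K" and j: "j < K"
  shows "(transpose_mat A * A) $$ (i,j) = (\<Sum>r<d. A $$ (r,i) * A $$ (r,j))"
proof -
  have AT: "transpose_mat A \<in> carrier_mat K d" using A by simp
  show ?thesis unfolding mult_entry[OF AT A i j] using A i j by (intro sum.cong refl) simp
qed

lemma gram_psd:
  fixes A :: "real mat"
  assumes A: "A \<in> carrier_mat d K"
  shows "0 \<le> qf K (transpose_mat A * A) f"
proof -
  have "qf K (transpose_mat A * A) f = (\<Sum>i<K. \<Sum>j<K. f i * (\<Sum>r<d. A $$ (r,i) * A $$ (r,j)) * f j)"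
    unfolding qf_def by (intro sum.cong refl) (simp add: gram_entry[OF A])
  also have "\<dots> = (\<Sum>i<K. \<Sum>j<K. \<Sum>r<d. f i * (A $$ (r,i) * A $$ (r,j)) * f j)"
    by (simp only: sum_distrib_left sum_distrib_right)
  also have "\<dots> = (\<Sum>i<K. \<Sum>j<K. \<Sum>r<d. (A $$ (r,i) * f i) * (A $$ (r,j) * f j))"
    by (intro sum.cong refl) (simp only: mult_ac)
  also have "\<dots> = (\<Sum>i<K. \<Sum>r<d. \<Sum>j<K. (A $$ (r,i) * f i) * (A $$ (r,j) * f j))"
    by (rule sum.cong[OF refl]) (rule sum.swap)
  also have "\<dots> = (\<Sum>r<d. \<Sum>i<K. \<Sum>j<K. (A $$ (r,i) * f i) * (A $$ (r,j) * f j))"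
    by (rule sum.swap)
  also have "\<dots> = (\<Sum>r<d. (\<Sum>i<K. A $$ (r,i) * f i)\<^sup>2)"
    by (intro sum.cong refl) (simp add: power2_eq_square sum_product)
  also have "\<dots> \<ge> 0" by (intro sum_nonneg) simp
  finally show ?thesis .
qed

lemma key_bound:
  fixes d K :: nat and Q X :: "real mat" and lam a :: "nat \<Rightarrow> real" and \<alpha> :: real
  assumes K1: "1 \<le> K" and Qs: "Q \<in> stiefel d K" and Xs: "X \<in> stiefel d K"
    and lam_ord: "\<And>i j. i < j \<Longrightarrow> j < K \<Longrightarrow> lam j < lam i" and lamK: "0 < lam (K - 1)"
    and a_ord: "\<And>i j. i < j \<Longrightarrow> j < K \<Longrightarrow> a j < a i" and aK: "0 < a (K - 1)"
    and small: "dist_F X Q \<le> dlt0 K lam"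
  shows "dist_F X Q \<le> eta K lam a * rho Q (mat_diag K (\<lambda>i. sqrt (lam i))) a \<alpha> X"
proof -
  have Q: "Q \<in> carrier_mat d K" and QQ: "transpose_mat Q * Q = 1\<^sub>m K" using Qs by (auto simp: stiefel_def)
  have X: "X \<in> carrier_mat d K" and XX: "transpose_mat X * X = 1\<^sub>m K" using Xs by (auto simp: stiefel_def)
  have lp: "0 < lam l" if l: "l < K" for l
  proof (cases "l = K - 1")
    case False hence "l < K - 1" using l by simp
    thus ?thesis using lam_ord[of l "K-1"] lamK K1 by simp
  qed (use lamK in simp)
  obtain qs where qs: "length qs = K" "set qs \<subseteq> {1, -1}"
    and dq: "dist_F X Q = frob_norm (X - Q * mat_diag K (\<lambda>i. qs ! i))"
    using dist_attained[where X=X and Q=Q] Q by auto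
  have sq: "qs ! i * qs ! i = 1" if "i < K" for i
  proof -
    have "qs ! i \<in> set qs" using qs(1) that by (rule_tac nth_mem) simp
    hence "qs ! i \<in> {1, -1}" using qs(2) by blast
    thus ?thesis by auto
  qed
  define x where "x = (\<lambda>r j. X $$ (r,j))"
  define q where "q = (\<lambda>r i. Q $$ (r,i) * qs ! i)"
  define Th where "Th = mat_diag K (\<lambda>i. sqrt (lam i))"
  define A where "A = A_op Q Th a \<alpha> X"
  have A: "A \<in> carrier_mat d K"
  proof -
    have TT: "Th * Th \<in> carrier_mat K K" by (simp add: Th_def)
    have QT: "transpose_mat Q \<in> carrier_mat K d" using Q by simp
    have B: "Q * (Th * Th) * transpose_mat Q * X * mat_diag K a \<in> carrier_mat d K"
      by (rule mult_carrier_mat[OF mult_carrier_mat[OF mult_carrier_mat[OF mult_carrier_mat[OF Q TT] QT] X] mat_diag_dim])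
    have "A = \<alpha> \<cdot>\<^sub>m X + Q * (Th * Th) * transpose_mat Q * X * mat_diag K a"
      unfolding A_def A_op_def using carrier_matD(2)[OF X] by simp
    thus ?thesis using add_carrier_mat[OF B] by simp
  qed
  define C where "C = transpose_mat A * A"
  have C: "C \<in> carrier_mat K K" using A by (simp add: C_def)
  have CT: "transpose_mat C = C"
    unfolding C_def using transpose_mult[of "transpose_mat A" K d A K] A by simp
  have Cpsd: "\<forall>v\<in>carrier_vec K. 0 \<le> v \<bullet> (C *\<^sub>v v)"
  proof
    fix v :: "real vec" assume v: "v \<in> carrier_vec K"
    have "v \<bullet> (C *\<^sub>v v) = qf K C (\<lambda>i. v $ i)" by (rule qf_vec[OF C v])
    also have "\<dots> \<ge> 0" unfolding C_def by (rule gram_psd[OF A])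
    finally show "0 \<le> v \<bullet> (C *\<^sub>v v)" .
  qed
  define P where "P = psd_sqrt C"
  have P: "P \<in> carrier_mat K K" and PT: "transpose_mat P = P"
    using psd_sqrt_props[OF C CT Cpsd] by (auto simp: P_def)
  interpret core2 d K x q lam a "\<lambda>k j. P $$ (k,j)" \<alpha>
  proof
    fix i j assume ij: "i < K" "j < K"
    have XT: "transpose_mat X \<in> carrier_mat K d" using X by simp
    have "ip d (\<lambda>r. x r i) (\<lambda>r. x r j) = (transpose_mat X * X) $$ (i,j)"
      unfolding ip_def x_def mult_entry[OF XT X ij] using X ij by (intro sum.cong refl) simp
    thus "ip d (\<lambda>r. x r i) (\<lambda>r. x r j) = (if i = j then 1 else 0)" using XX ij by simp
    have QT: "transpose_mat Q \<in> carrier_mat K d" using Q by simp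
    have "ip d (\<lambda>r. q r i) (\<lambda>r. q r j) = qs ! i * qs ! j * (transpose_mat Q * Q) $$ (i,j)"
      unfolding ip_def q_def mult_entry[OF QT Q ij] sum_distrib_left
      using Q ij by (intro sum.cong refl) (simp add: mult_ac)
    also have "\<dots> = (if i = j then 1 else 0)" using QQ ij sq[of i] by (cases "i = j") simp_all
    finally show "ip d (\<lambda>r. q r i) (\<lambda>r. q r j) = (if i = j then 1 else 0)" .
    show "P $$ (i,j) = P $$ (j,i)" using transpose_sym_entry[OF PT P ij] .
  next
    show "1 \<le> K" by (rule K1)
  qed (use lam_ord lamK a_ord aK in auto)
  have Yeq: "Y r j = (X * P - A) $$ (r,j)" if r: "r < d" and j: "j < K" for r j
  proof -
    have XP: "X * P \<in> carrier_mat d K" using X P by simp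
    have "(X * P - A) $$ (r,j) = (X * P) $$ (r,j) - A $$ (r,j)" using A r j by simp
    also have "(X * P) $$ (r,j) = (\<Sum>k<K. x r k * P $$ (k,j))" unfolding mult_entry[OF X P r j] x_def ..
    also have "A $$ (r,j) = \<alpha> * x r j + a j * (\<Sum>s<d. (\<Sum>l<K. Q $$ (r,l) * lam l * Q $$ (s,l)) * X $$ (s,j))"
      unfolding A_def Th_def x_def by (rule A_entry[OF Q X lp r j])
    also have "(\<Sum>s<d. (\<Sum>l<K. Q $$ (r,l) * lam l * Q $$ (s,l)) * X $$ (s,j)) = m r j"
    proof -
      have "m r j = (\<Sum>l<K. \<Sum>s<d. (lam l * (Q $$ (s,l) * qs ! l * X $$ (s,j))) * (Q $$ (r,l) * qs ! l))"
        unfolding m_def c_def unfolding ip_def q_def x_def by (simp only: sum_distrib_left sum_distrib_right)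
      also have "\<dots> = (\<Sum>l<K. \<Sum>s<d. Q $$ (r,l) * lam l * Q $$ (s,l) * X $$ (s,j) * (qs ! l * qs ! l))"
        by (intro sum.cong refl) (simp only: mult_ac)
      also have "\<dots> = (\<Sum>l<K. \<Sum>s<d. Q $$ (r,l) * lam l * Q $$ (s,l) * X $$ (s,j))"
        by (intro sum.cong refl) (simp add: sq)
      also have "\<dots> = (\<Sum>s<d. \<Sum>l<K. Q $$ (r,l) * lam l * Q $$ (s,l) * X $$ (s,j))" by (rule sum.swap)
      also have "\<dots> = (\<Sum>s<d. (\<Sum>l<K. Q $$ (r,l) * lam l * Q $$ (s,l)) * X $$ (s,j))"
        by (simp add: sum_distrib_right)
      finally show ?thesis by simp
    qed
    finally show ?thesis unfolding Y_def by simp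
  qed
  have dXPA: "dim_row (X * P - A) = d" "dim_col (X * P - A) = K" using A by auto
  define \<rho> where "\<rho> = rho Q Th a \<alpha> X"
  have rho_eq: "\<rho> = sqrt (\<Sum>r<d. \<Sum>j<K. (Y r j)\<^sup>2)"
    unfolding \<rho>_def rho_def Let_def A_def[symmetric] C_def[symmetric] P_def[symmetric] frob_norm_def dXPA
    by (simp add: Yeq)
  have rho0: "0 \<le> \<rho>" unfolding rho_eq by (simp add: sum_nonneg)
  have rho2: "(\<Sum>r<d. \<Sum>j<K. (Y r j)\<^sup>2) \<le> \<rho>\<^sup>2" unfolding rho_eq by (simp add: sum_nonneg)
  have eps_eq: "eps = dist_F X Q"
  proof -
    have QD: "Q * mat_diag K (\<lambda>i. qs ! i) \<in> carrier_mat d K" using Q by simp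
    have QDe: "(Q * mat_diag K (\<lambda>i. qs ! i)) $$ (r,j) = q r j" if "r < d" "j < K" for r j
      using mat_diag_mult_right[OF Q, of "\<lambda>i. qs ! i"] that by (simp add: q_def)
    have dims: "dim_row (X - Q * mat_diag K (\<lambda>i. qs ! i)) = d" "dim_col (X - Q * mat_diag K (\<lambda>i. qs ! i)) = K"
      using QD by auto
    have ent: "(X - Q * mat_diag K (\<lambda>i. qs ! i)) $$ (r,j) = x r j - q r j" if "r < d" "j < K" for r j
      using that carrier_matD[OF QD] QDe[OF that] by (simp add: x_def)
    show ?thesis unfolding dq frob_norm_def dims eps_def E_def
      by (intro arg_cong[where f=sqrt] sum.cong refl) (simp add: ent)
  qed
  have "eps \<le> eta K lam a * \<rho>"
    by (rule main_local[OF rho0 rho2]) (use small eps_eq in simp)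
  thus ?thesis using eps_eq by (simp add: \<rho>_def Th_def)
qed

theorem theorem2:
  fixes d K :: nat and Q :: "real mat" and lam a :: "nat \<Rightarrow> real"
  assumes "1 \<le> K" and "K < d"
    and "Q \<in> stiefel d K"
    and "\<And>i j. i < j \<Longrightarrow> j < K \<Longrightarrow> lam j < lam i" and "0 < lam (K - 1)"
    and "\<And>i j. i < j \<Longrightarrow> j < K \<Longrightarrow> a j < a i" and "0 < a (K - 1)"
  shows "\<exists>\<delta>. 0 < \<delta> \<and> \<delta> < sqrt 2 / 2 \<and>
           lam (K - 1) * a (K - 1) - lam 0 * a 0 * \<delta> > 0 \<and>
           (\<forall>\<alpha>. 0 \<le> \<alpha> \<and> \<alpha> < lam (K - 1) * a (K - 1) - lam 0 * a 0 * \<delta> \<longrightarrow>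
              (\<exists>\<eta>1 > 0. \<forall>X \<in> stiefel d K. dist_F X Q \<le> \<delta> \<longrightarrow>
                 dist_F X Q \<le> \<eta>1 * rho Q (mat_diag K (\<lambda>i. sqrt (lam i))) a \<alpha> X))"
proof -
  note K1 = assms(1) and Qs = assms(3) and lam_ord = assms(4) and lamK = assms(5)
    and a_ord = assms(6) and aK = assms(7)
  have lam0: "0 < lam 0"
  proof (cases "K - 1 = 0")
    case True thus ?thesis using lamK by simp
  next
    case False thus ?thesis using lam_ord[of 0 "K-1"] lamK K1 by simp
  qed
  have a0: "0 < a 0"
  proof (cases "K - 1 = 0")
    case True thus ?thesis using aK by simp
  next
    case False thus ?thesis using a_ord[of 0 "K-1"] aK K1 by simp
  qed
  have Kpos: "0 < real K" using K1 by simp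
  have C2nn: "0 \<le> cC2 K lam" unfolding cC2_def
    by (intro sum_nonneg) (auto intro!: divide_nonneg_nonneg mult_nonneg_nonneg less_imp_le[OF lam0])
  have C1nn: "0 \<le> cC1 K lam a" unfolding cC1_def
    by (intro sum_nonneg) (auto intro!: divide_nonneg_nonneg mult_nonneg_nonneg)
  have C3nn: "0 \<le> cC3 K lam a" unfolding cC3_def using lamK aK by simp
  have d0: "0 < dlt0 K lam" unfolding dlt0_def using lamK lam0 Kpos C2nn
    by (simp add: divide_pos_pos)
  define \<delta> where "\<delta> = min (dlt0 K lam) (min (1/2) (lam (K-1) * a (K-1) / (2 * lam 0 * a 0)))"
  have \<delta>pos: "0 < \<delta>" unfolding \<delta>_def using d0 lamK aK lam0 a0 by simp
  have "\<delta> \<le> 1/2" unfolding \<delta>_def by simp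
  moreover have "1/2 < sqrt 2 / 2"
  proof -
    have "sqrt 1 < sqrt 2" by (rule real_sqrt_less_mono) simp
    thus ?thesis by simp
  qed
  ultimately have \<delta>s: "\<delta> < sqrt 2 / 2" by linarith
  have "\<delta> \<le> lam (K-1) * a (K-1) / (2 * lam 0 * a 0)" unfolding \<delta>_def by simp
  hence "lam 0 * a 0 * \<delta> \<le> lam (K-1) * a (K-1) / 2" using lam0 a0 by (simp add: field_simps)
  moreover have "0 < lam (K-1) * a (K-1)" using lamK aK by simp
  ultimately have gap: "lam (K - 1) * a (K - 1) - lam 0 * a 0 * \<delta> > 0" by linarith
  have eta: "0 < eta K lam a" unfolding eta_def using C1nn C3nn by simp
  have main: "\<forall>X \<in> stiefel d K. dist_F X Q \<le> \<delta> \<longrightarrow>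
                 dist_F X Q \<le> eta K lam a * rho Q (mat_diag K (\<lambda>i. sqrt (lam i))) a \<alpha> X" for \<alpha>
  proof (intro ballI impI)
    fix X assume X: "X \<in> stiefel d K" and dX: "dist_F X Q \<le> \<delta>"
    have dl: "dist_F X Q \<le> dlt0 K lam" using dX unfolding \<delta>_def by simp
    show "dist_F X Q \<le> eta K lam a * rho Q (mat_diag K (\<lambda>i. sqrt (lam i))) a \<alpha> X"
    proof (rule key_bound)
      show "\<And>i j. i < j \<Longrightarrow> j < K \<Longrightarrow> lam j < lam i" by (rule lam_ord)
      show "\<And>i j. i < j \<Longrightarrow> j < K \<Longrightarrow> a j < a i" by (rule a_ord)
    qed (use K1 Qs X lamK aK dl in auto)
  qed
  show ?thesis using \<delta>pos \<delta>s gap eta main by blast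
qed

end
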